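(* Let $z$ be an indeterminate and $\widehat B_z(x)=\sum_{n\ge0}\left(\frac1z\int_0^z\beta_n(y)\,dy\right)x^n$. As formal power series in $x$, $$\widehat B_z(x)=\cfrac{1}{[1]_q+\cfrac{([1]_q-z)x}{\frac{q+1}{[1]_q}-\cfrac{([1]_q+qz)x}{[3]_q+\cfrac{q([2]_q-z)x}{\frac{q^2+1}{[2]_q}-\cfrac{([2]_q+q^2z)x}{[5]_q+\cfrac{q^2([3]_q-z)x}{\frac{q^3+1}{[3]_q}-\cfrac{([3]_q+q^3z)x}{\ddots}}}}}}}$$ where the pattern is: for each $n\ge1$ the denominator $[2n-1]_q$ is followed by $+\,q^{n-1}([n]_q-z)x$ over $\frac{q^n+1}{[n]_q}$, which is followed by $-\,([n]_q+q^nz)x$ over $[2n+1]_q$, and so on.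
   Context: $q$ is an indeterminate. The $q$-Bernoulli–Carlitz numbers $\beta_n\in\mathbb{Q}(q)$ are defined by: for all $n\ge0$, $q\sum_{k=0}^{n}\binom{n}{k}q^k\beta_k-\beta_n$ equals $q-1$ if $n=0$, $1$ if $n=1$, and $0$ if $n>1$. Let $\Psi$ be the linear form with $\Psi(x^n)=\beta_n$, extended linearly over $\mathbb{Q}(q)[z]$, and $\beta_n(z)=\Psi\big((z+(z(q-1)+1)x)^n\big)$ the $q$-Bernoulli–Carlitz polynomials; the integral is the ordinary integral of a polynomial in $y$. $[m]_q=(q^m-1)/(q-1)$. *)

theory Defs
  imports "HOL-Computational_Algebra.Polynomial" "HOL-Computational_Algebra.Formal_Power_Series" "HOL-Computational_Algebra.Fraction_Field"
begin

text \<open>The field Q(q) of rational functions in the indeterminate q, and the field Q(q)(z).\<close>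
type_synonym Kq = "rat poly fract"
type_synonym Lqz = "Kq poly fract"

definition qK :: Kq where "qK = Fract [:0, 1:] 1"

definition qL :: Lqz where "qL = Fract [:qK:] 1"
definition zL :: Lqz where "zL = Fract [:0, 1:] 1"

definition qint :: "'a::field \<Rightarrow> nat \<Rightarrow> 'a" where
  "qint q m = (q ^ m - 1) / (q - 1)"

definition is_qBC_numbers :: "(nat \<Rightarrow> Kq) \<Rightarrow> bool" where
  "is_qBC_numbers beta \<longleftrightarrow>
     (\<forall>n. qK * (\<Sum>k\<le>n. of_nat (n choose k) * qK ^ k * beta k) - beta n
          = (if n = 0 then qK - 1 else if n = 1 then 1 else 0))"

text \<open>The linear form Psi(x^k) = beta k, extended linearly over Q(q)[z];
  a polynomial in x with coefficients in Q(q)[z] is a Kq poly poly.\<close>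
definition Psi :: "(nat \<Rightarrow> Kq) \<Rightarrow> Kq poly poly \<Rightarrow> Kq poly" where
  "Psi beta P = (\<Sum>k\<le>degree P. coeff P k * [:beta k:])"

text \<open>q-Bernoulli-Carlitz polynomials beta_n(z) = Psi((z + (z(q-1)+1)x)^n).\<close>
definition qBC_poly :: "(nat \<Rightarrow> Kq) \<Rightarrow> nat \<Rightarrow> Kq poly" where
  "qBC_poly beta n = Psi beta ([: [:0, 1:], [:1, qK - 1:] :] ^ n)"

definition pint :: "'a::field_char_0 poly \<Rightarrow> 'a poly" where
  "pint p = (\<Sum>i\<le>degree p. monom (coeff p i / of_nat (Suc i)) (Suc i))"

definition pavg :: "'a::field_char_0 poly \<Rightarrow> 'a poly" where
  "pavg p = pint p div [:0, 1:]"

definition Bhat :: "(nat \<Rightarrow> Kq) \<Rightarrow> Lqz fps" where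
  "Bhat beta = Abs_fps (\<lambda>n. Fract (pavg (qBC_poly beta n)) 1)"

text \<open>Continued fraction b0 + a1 x/(b1 + a2 x/(b2 + ... + a_d x / b_d)), truncated at depth d,
  starting at index j.\<close>
fun cf_tail :: "(nat \<Rightarrow> 'a::field) \<Rightarrow> (nat \<Rightarrow> 'a) \<Rightarrow> nat \<Rightarrow> nat \<Rightarrow> 'a fps" where
  "cf_tail a b j 0 = fps_const (b j)"
| "cf_tail a b j (Suc d) =
     fps_const (b j) + fps_const (a (Suc j)) * fps_X * inverse (cf_tail a b (Suc j) d)"

definition cf_conv :: "(nat \<Rightarrow> 'a::field) \<Rightarrow> (nat \<Rightarrow> 'a) \<Rightarrow> nat \<Rightarrow> 'a fps" where
  "cf_conv a b d = inverse (cf_tail a b 0 d)"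

text \<open>Partial denominators: b(2n) = [2n+1]_q, b(2n+1) = (q^(n+1)+1)/[n+1]_q.\<close>
definition cfB :: "nat \<Rightarrow> Lqz" where
  "cfB j = (if even j then qint qL (j + 1)
            else (qL ^ ((j + 1) div 2) + 1) / qint qL ((j + 1) div 2))"

text \<open>Partial numerators (coefficient of x): a(2n+1) = q^n([n+1]_q - z),
  a(2n+2) = -([n+1]_q + q^(n+1) z).\<close>
definition cfA :: "nat \<Rightarrow> Lqz" where
  "cfA j = (if odd j then qL ^ ((j - 1) div 2) * (qint qL ((j + 1) div 2) - zL)
            else - (qint qL (j div 2) + qL ^ (j div 2) * zL))"

end

theory Submission
  imports Defs
begin

unbundle fps_syntax



lemma Xpow_dvdI:
  fixes f :: "'a::comm_ring_1 fps"
  assumes "\<And>i. i < m \<Longrightarrow> f $ i = 0"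
  shows "fps_X ^ m dvd f"
proof -
  have "f = fps_X ^ m * fps_shift m f"
    by (rule fps_ext) (simp add: fps_X_power_mult_nth assms)
  then show ?thesis by (metis dvdI)
qed

lemma Xpow_dvdD:
  fixes f :: "'a::comm_ring_1 fps"
  assumes "fps_X ^ m dvd f" "i < m"
  shows "f $ i = 0"
proof -
  from assms(1) obtain g where "f = fps_X ^ m * g" by (auto elim: dvdE)
  then show ?thesis using assms(2) by (simp add: fps_X_power_mult_nth)
qed

lemma cf_tail_nth0: "cf_tail a b j d $ 0 = b j"
  by (cases d) simp_all

lemma cf_limit:
  fixes a b :: "nat \<Rightarrow> 'a::field" and H :: "nat \<Rightarrow> 'a fps"
  assumes rec: "\<And>j. H j = fps_const (b j) * H (Suc j) + fps_const (a (Suc j)) * fps_X * H (Suc (Suc j))"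
    and b: "\<And>j. b j \<noteq> 0" and H0: "H 0 $ 0 \<noteq> 0"
  shows "cf_conv a b \<longlonglongrightarrow> H 1 * inverse (H 0)"
proof -
  have Hnz: "H j $ 0 \<noteq> 0" for j
  proof (induction j)
    case 0 then show ?case using H0 .
  next
    case (Suc j)
    have "H j $ 0 = b j * H (Suc j) $ 0"
      by (subst rec) simp
    then show ?case using Suc by auto
  qed
  have inv1: "H j * inverse (H j) = 1" for j using Hnz by (rule inverse_mult_eq_1')
  have key: "fps_X ^ Suc d dvd (inverse (cf_tail a b j d) - H (Suc j) * inverse (H j))" for d j
  proof (induction d arbitrary: j)
    case 0
    have "H j $ 0 = b j * H (Suc j) $ 0"
      by (subst rec) simp
    then have "(inverse (cf_tail a b j 0) - H (Suc j) * inverse (H j)) $ 0 = 0"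
      using Hnz[of "Suc j"] b[of j] by (simp add: fps_const_inverse field_simps)
    then show ?case by (intro Xpow_dvdI) auto
  next
    case (Suc d)
    define S where "S = inverse (cf_tail a b (Suc j) d)"
    define S' where "S' = H (Suc (Suc j)) * inverse (H (Suc j))"
    define c where "c = cf_tail a b j (Suc d)"
    define T where "T = H j * inverse (H (Suc j))"
    have c: "c = fps_const (b j) + fps_const (a (Suc j)) * fps_X * S"
      by (simp add: c_def S_def)
    have T: "T = fps_const (b j) + fps_const (a (Suc j)) * fps_X * S'"
      unfolding T_def S'_def
      by (subst rec) (simp add: algebra_simps inv1)
    have TH: "T * H (Suc j) = H j"
      unfolding T_def using inv1[of "Suc j"] by (simp add: mult.assoc mult.commute)
    have c0: "c $ 0 \<noteq> 0" unfolding c_def using b by (simp add: cf_tail_nth0)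
    from Suc.IH[of "Suc j"] obtain g where g: "S - S' = fps_X ^ Suc d * g"
      unfolding S_def S'_def by (auto elim: dvdE)
    have "T - c = fps_const (a (Suc j)) * fps_X * (S' - S)" by (simp add: T c algebra_simps)
    also have "S' - S = - (fps_X ^ Suc d * g)" using g by (simp add: algebra_simps)
    finally have "T - c = fps_X ^ Suc (Suc d) * (- (fps_const (a (Suc j)) * g))"
      by (simp only: power_Suc mult_minus_right mult_minus_left) (simp only: ac_simps)
    then have dv: "fps_X ^ Suc (Suc d) dvd (T - c)" by (metis dvdI)
    have "inverse c - H (Suc j) * inverse (H j) = inverse c * ((T - c) * H (Suc j)) * inverse (H j)"
    proof -
      have "inverse c * ((T - c) * H (Suc j)) * inverse (H j)
          = inverse c * (H j - c * H (Suc j)) * inverse (H j)"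
        using TH by (simp add: algebra_simps)
      also have "\<dots> = inverse c * (H j * inverse (H j)) - (inverse c * c) * H (Suc j) * inverse (H j)"
        by (simp add: algebra_simps)
      also have "\<dots> = inverse c - H (Suc j) * inverse (H j)"
        using inverse_mult_eq_1[OF c0] inv1 by simp
      finally show ?thesis by simp
    qed
    then show ?case using dv unfolding c_def
      by (metis dvd_mult dvd_mult2)
  qed
  show ?thesis
  proof (rule tendsto_fpsI)
    fix n
    show "eventually (\<lambda>d. cf_conv a b d $ n = (H 1 * inverse (H 0)) $ n) sequentially"
      unfolding eventually_sequentially
    proof (intro exI allI impI)
      fix d assume "n \<le> d"
      have "(cf_conv a b d - H 1 * inverse (H 0)) $ n = 0"
        using Xpow_dvdD[OF key[of d 0]] \<open>n \<le> d\<close> by (simp add: cf_conv_def)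
      then show "cf_conv a b d $ n = (H 1 * inverse (H 0)) $ n" by simp
    qed
  qed
qed


lemma pcompose_power: "pcompose (p ^ n) q = pcompose p q ^ n"
  by (induction n) (simp_all add: pcompose_mult pcompose_1)

lemma pcompose_monom: "pcompose (monom c n) q = smult c (q ^ n)"
  by (simp add: monom_altdef pcompose_smult pcompose_power pcompose_pCons)

lemma pderiv_sum: "pderiv (sum f A) = (\<Sum>x\<in>A. pderiv (f x))"
  by (induction A rule: infinite_finite_induct) (simp_all add: pderiv_add)

lemma Psi_bound:
  assumes "degree P \<le> N"
  shows "Psi beta P = (\<Sum>k\<le>N. coeff P k * [:beta k:])"
  unfolding Psi_def
  by (rule sum.mono_neutral_left) (use assms in \<open>auto simp: coeff_eq_0\<close>)

lemma Psi_add: "Psi beta (P + Q) = Psi beta P + Psi beta Q"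
proof -
  let ?N = "max (degree P) (degree Q)"
  have "degree (P + Q) \<le> ?N" by (rule degree_add_le) auto
  then show ?thesis
    by (simp add: Psi_bound[of _ ?N] Psi_bound[of P ?N] Psi_bound[of Q ?N] sum.distrib smult_add_right)
qed

lemma Psi_0 [simp]: "Psi beta 0 = 0" by (simp add: Psi_def)

lemma Psi_minus: "Psi beta (- P) = - Psi beta P"
  by (simp add: Psi_def sum_negf)

lemma Psi_diff: "Psi beta (P - Q) = Psi beta P - Psi beta Q"
  using Psi_add[of beta P "-Q"] by (simp add: Psi_minus)

lemma Psi_smult: "Psi beta (smult c P) = c * Psi beta P"
proof (cases "c = 0")
  case False
  then show ?thesis by (simp add: Psi_def sum_distrib_left mult.assoc)
qed simp

lemma Psi_sum: "Psi beta (\<Sum>x\<in>A. f x) = (\<Sum>x\<in>A. Psi beta (f x))"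
  by (induction A rule: infinite_finite_induct) (simp_all add: Psi_add)

lemma Psi_monom: "Psi beta (monom c k) = smult (beta k) c"
proof -
  have "Psi beta (monom c k) = (\<Sum>i\<le>k. coeff (monom c k) i * [:beta i:])"
    by (rule Psi_bound) (simp add: degree_monom_le)
  also have "\<dots> = (\<Sum>i\<le>k. if i = k then c * [:beta k:] else 0)"
    by (intro sum.cong refl) (auto simp: coeff_monom)
  finally show ?thesis by simp
qed

lemma const_poly_sum: "(\<Sum>k\<in>A. [:f k:]) = [:\<Sum>k\<in>A. f k:]"
  by (induction A rule: infinite_finite_induct) simp_all

definition gY :: "Kq poly poly" where "gY = [:1, [:qK:]:]"

lemma gY_power: "gY ^ n = (\<Sum>k\<le>n. monom (of_nat (n choose k) * [:qK ^ k:]) k)"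
proof -
  have e: "gY = monom [:qK:] 1 + 1" by (simp add: gY_def monom_Suc monom_0 one_pCons)
  have "gY ^ n = (\<Sum>k\<le>n. of_nat (n choose k) * monom [:qK:] 1 ^ k * 1 ^ (n - k))"
    unfolding e by (rule binomial_ring)
  also have "\<dots> = (\<Sum>k\<le>n. monom (of_nat (n choose k) * [:qK ^ k:]) k)"
  proof (intro sum.cong refl)
    fix k
    have "of_nat (n choose k) * monom [:qK:] 1 ^ k * 1 ^ (n - k)
        = [:of_nat (n choose k):] * monom [:qK ^ k:] k"
      by (simp add: monom_power poly_const_pow of_nat_poly)
    also have "\<dots> = monom (of_nat (n choose k) * [:qK ^ k:]) k"
      by (simp add: smult_monom of_nat_poly)
    finally show "of_nat (n choose k) * monom [:qK:] 1 ^ k * 1 ^ (n - k)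
        = monom (of_nat (n choose k) * [:qK ^ k:]) k" .
  qed
  finally show ?thesis .
qed

lemma Psi_gY_power: "Psi beta (gY ^ n) = [: \<Sum>k\<le>n. of_nat (n choose k) * qK ^ k * beta k :]"
  by (simp add: gY_power Psi_sum Psi_monom of_nat_poly const_poly_sum ac_simps)

lemma smult_sum2: "smult a (\<Sum>i\<in>S. f i) = (\<Sum>i\<in>S. smult a (f i))"
  by (induction S rule: infinite_finite_induct) (simp_all add: smult_add_right)

lemma PsiRec_monom:
  assumes "is_qBC_numbers beta"
  shows "Psi beta (smult [:qK:] (pcompose (monom c n) gY) - monom c n)
       = smult (qK - 1) (coeff (monom c n) 0) + coeff (monom c n) 1"
proof -
  define S where "S = (\<Sum>k\<le>n. of_nat (n choose k) * qK ^ k * beta k)"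
  have r: "qK * S - beta n = (if n = 0 then qK - 1 else if n = 1 then 1 else 0)"
    using assms unfolding is_qBC_numbers_def S_def by blast
  have "Psi beta (smult [:qK:] (pcompose (monom c n) gY) - monom c n)
      = [:qK:] * (c * [:S:]) - smult (beta n) c"
    by (simp add: pcompose_monom Psi_diff Psi_smult Psi_monom Psi_gY_power S_def)
  also have "\<dots> = smult (qK * S - beta n) c"
    by (simp add: algebra_simps smult_diff_left)
  also have "\<dots> = smult (qK - 1) (coeff (monom c n) 0) + coeff (monom c n) 1"
    unfolding r by (auto simp: coeff_monom)
  finally show ?thesis .
qed

lemma PsiRec:
  assumes "is_qBC_numbers beta"
  shows "Psi beta (smult [:qK:] (pcompose f gY) - f) = smult (qK - 1) (coeff f 0) + coeff f 1"
proof -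
  let ?m = "\<lambda>i. monom (coeff f i) i"
  have f: "f = (\<Sum>i\<le>degree f. ?m i)" by (simp add: poly_as_sum_of_monoms)
  have "smult [:qK:] (pcompose f gY) - f = (\<Sum>i\<le>degree f. smult [:qK:] (pcompose (?m i) gY) - ?m i)"
    by (subst (1 2) f) (simp add: pcompose_sum smult_sum2 sum_subtractf)
  then have "Psi beta (smult [:qK:] (pcompose f gY) - f)
     = (\<Sum>i\<le>degree f. smult (qK - 1) (coeff (?m i) 0) + coeff (?m i) 1)"
    by (simp add: Psi_sum PsiRec_monom[OF assms])
  also have "\<dots> = smult (qK - 1) (\<Sum>i\<le>degree f. coeff (?m i) 0) + (\<Sum>i\<le>degree f. coeff (?m i) 1)"
    by (simp only: sum.distrib smult_sum2)
  also have "\<dots> = smult (qK - 1) (coeff f 0) + coeff f 1"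
    by (simp only: coeff_sum[symmetric] poly_as_sum_of_monoms)
  finally show ?thesis .
qed

definition X0 :: "Kq poly poly" where "X0 = [: [:0, 1:], [:1, qK - 1:] :]"

lemma X0_mult_coeffs: "coeff (X0 * R) 0 = [:0,1:] * coeff R 0 \<and> coeff (X0 * R) 1 = [:0,1:] * coeff R 1 + [:1, qK - 1:] * coeff R 0"
  by (simp add: X0_def coeff_mult) 

lemma X0_coeffs: "coeff (X0 ^ n) 0 = [:0, 1:] ^ n \<and> coeff (X0 ^ n) 1 = of_nat n * [:0,1:] ^ (n - 1) * [:1, qK - 1:]"
proof (induction n)
  case (Suc n)
  have a: "coeff (X0 ^ Suc n) 0 = [:0,1:] * coeff (X0 ^ n) 0"
   and b: "coeff (X0 ^ Suc n) 1 = [:0,1:] * coeff (X0 ^ n) 1 + [:1, qK - 1:] * coeff (X0 ^ n) 0"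
    using X0_mult_coeffs[of "X0 ^ n"] by (simp_all only: power_Suc)
  have c: "[:0,1:] * (of_nat n * [:0,1:] ^ (n - 1) * [:1, qK - 1:]) + [:1, qK - 1:] * [:0,1:] ^ n
     = of_nat (Suc n) * [:0,1:] ^ (Suc n - 1) * ([:1, qK - 1:] :: Kq poly)"
    by (cases n) (simp_all add: algebra_simps)
  show ?case unfolding a b using Suc.IH c by simp
qed simp

lemma gY_X0: "pcompose X0 gY = [: [:1, qK:], [:qK, qK * (qK - 1):] :]"
  by (simp add: X0_def gY_def pcompose_pCons algebra_simps)


definition ip :: "Kq poly \<Rightarrow> Lqz" where "ip p = Fract p 1"
definition ic :: "Kq \<Rightarrow> Lqz" where "ic c = ip [:c:]"
definition jp :: "rat poly \<Rightarrow> Kq" where "jp p = Fract p 1"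

lemma ip_add [simp]: "ip (p + q) = ip p + ip q" by (simp add: ip_def)
lemma ip_mult [simp]: "ip (p * q) = ip p * ip q" by (simp add: ip_def)
lemma ip_minus [simp]: "ip (- p) = - ip p" by (simp add: ip_def)
lemma ip_diff [simp]: "ip (p - q) = ip p - ip q" by (simp add: ip_def)
lemma ip_0 [simp]: "ip 0 = 0" by (simp add: ip_def Zero_fract_def)
lemma ip_1 [simp]: "ip 1 = 1" by (simp add: ip_def One_fract_def)
lemma ip_eq_iff [simp]: "ip p = ip q \<longleftrightarrow> p = q" by (simp add: ip_def eq_fract)
lemma ip_eq_0_iff [simp]: "ip p = 0 \<longleftrightarrow> p = 0" using ip_eq_iff[of p 0] by simp
lemma ip_pow [simp]: "ip (p ^ n) = ip p ^ n" by (induction n) simp_all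
lemma ip_sum: "ip (\<Sum>x\<in>A. f x) = (\<Sum>x\<in>A. ip (f x))"
  by (induction A rule: infinite_finite_induct) simp_all
lemma ip_of_nat [simp]: "ip (of_nat n) = of_nat n" by (induction n) simp_all

lemma ic_add [simp]: "ic (a + b) = ic a + ic b" by (simp add: ic_def flip: ip_add)
lemma ic_mult [simp]: "ic (a * b) = ic a * ic b" by (simp add: ic_def flip: ip_mult)
lemma ic_minus [simp]: "ic (- a) = - ic a" by (simp add: ic_def flip: ip_minus)
lemma ic_diff [simp]: "ic (a - b) = ic a - ic b" by (simp add: ic_def flip: ip_diff)
lemma ic_0 [simp]: "ic 0 = 0" by (simp add: ic_def)
lemma ic_1 [simp]: "ic 1 = 1" by (simp add: ic_def one_pCons[symmetric])
lemma ic_eq_iff [simp]: "ic a = ic b \<longleftrightarrow> a = b" by (simp add: ic_def)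
lemma ic_eq_0_iff [simp]: "ic a = 0 \<longleftrightarrow> a = 0" using ic_eq_iff[of a 0] by simp
lemma ic_pow [simp]: "ic (a ^ n) = ic a ^ n" by (induction n) simp_all
lemma ic_of_nat [simp]: "ic (of_nat n) = of_nat n" by (induction n) simp_all
lemma ic_inverse [simp]: "ic (inverse a) = inverse (ic a)"
proof (cases "a = 0")
  case False
  have "ic (inverse a) * ic a = 1" using False by (simp flip: ic_mult)
  then show ?thesis using False by (simp add: field_simps)
qed simp
lemma ic_divide [simp]: "ic (a / b) = ic a / ic b"
  by (simp add: divide_inverse)

lemma ip_smult [simp]: "ip (smult c p) = ic c * ip p"
  by (simp add: ic_def ip_def)
lemma ip_pCons: "ip (pCons a p) = ic a + zL * ip p"
proof -
  have "pCons a p = [:a:] + [:0,1:] * p" by simp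
  then show ?thesis by (simp add: ic_def zL_def ip_def)
qed
lemma ip_const [simp]: "ip [:a:] = ic a" by (simp add: ic_def)

lemma qL_ic: "qL = ic qK" by (simp add: qL_def ic_def ip_def)
lemma zL_ip: "zL = ip [:0,1:]" by (simp add: zL_def ip_def)

lemma qint_ic: "qint qL m = ic (qint qK m)"
  by (simp add: qint_def qL_ic)

lemma lin_nz:
  assumes "B \<noteq> 0" shows "ic A + ic B * zL \<noteq> 0"
proof -
  have "ic A + ic B * zL = ip [:A, B:]"
    by (simp add: ip_pCons algebra_simps)
  then show ?thesis using assms by simp
qed

lemma jp_mult [simp]: "jp (p * q) = jp p * jp q" by (simp add: jp_def)
lemma jp_add [simp]: "jp (p + q) = jp p + jp q" by (simp add: jp_def)
lemma jp_1 [simp]: "jp 1 = 1" by (simp add: jp_def One_fract_def)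
lemma jp_minus [simp]: "jp (- p) = - jp p" by (simp add: jp_def)
lemma jp_pow [simp]: "jp (p ^ n) = jp p ^ n" by (induction n) simp_all
lemma jp_eq_iff [simp]: "jp p = jp q \<longleftrightarrow> p = q" by (simp add: jp_def eq_fract)

lemma qK_jp: "qK = jp [:0,1:]" by (simp add: qK_def jp_def)

lemma qK_pow_ne1: "m > 0 \<Longrightarrow> qK ^ m \<noteq> 1"
proof
  assume "m > 0" "qK ^ m = 1"
  moreover have "jp ([:0,1:] ^ m) = qK ^ m" by (simp add: qK_jp)
  ultimately have "jp ([:0,1:] ^ m) = jp 1" by simp
  then have "([:0,1:] :: rat poly) ^ m = 1" by (simp only: jp_eq_iff)
  then have "degree (([:0,1:] :: rat poly) ^ m) = 0" by simp
  then show False using \<open>m > 0\<close> by (simp add: degree_power_eq)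
qed

lemma qK_pow_ne_neg1: "qK ^ m \<noteq> - 1"
proof
  assume "qK ^ m = - 1"
  moreover have "jp ([:0,1:] ^ m) = qK ^ m" by (simp add: qK_jp)
  ultimately have "jp ([:0,1:] ^ m) = jp (- 1)" by simp
  then have e: "([:0,1:] :: rat poly) ^ m = - 1" by (simp only: jp_eq_iff)
  show False
  proof (cases m)
    case 0 then show False using e by simp
  next
    case (Suc k)
    then have "degree (([:0,1:] :: rat poly) ^ m) = m" by (simp add: degree_power_eq)
    with e Suc show False by simp
  qed
qed

lemma jp_0 [simp]: "jp 0 = 0" by (simp add: jp_def Zero_fract_def)

lemma qK_nz: "qK \<noteq> 0"
proof
  assume "qK = 0"
  then have "jp [:0,1:] = jp 0" by (simp add: qK_jp)
  then show False by (simp only: jp_eq_iff) simp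
qed

lemma qK_ne1: "qK \<noteq> 1" using qK_pow_ne1[of 1] by simp

lemma qint_qK_nz: "m > 0 \<Longrightarrow> qint qK m \<noteq> 0"
  using qK_pow_ne1 qK_ne1 by (simp add: qint_def)

lemma qL_nz [simp]: "qL \<noteq> 0" by (simp add: qL_ic qK_nz)
lemma qL_ne1 [simp]: "qL \<noteq> 1" using qK_ne1 by (simp add: qL_ic flip: ic_1)
lemma qL_m1_nz [simp]: "qL - 1 \<noteq> 0" using qL_ne1 by simp
lemma qL_pow_ne1: "m > 0 \<Longrightarrow> qL ^ m \<noteq> 1"
  using qK_pow_ne1 by (simp add: qL_ic flip: ic_1 ic_pow)
lemma qL_pow_ne_neg1: "qL ^ m \<noteq> - 1"
  using qK_pow_ne_neg1 by (simp add: qL_ic flip: ic_1 ic_pow ic_minus)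
lemma qint_nz: "m > 0 \<Longrightarrow> qint qL m \<noteq> 0"
  using qint_qK_nz by (simp add: qint_ic)


definition mu :: "(nat \<Rightarrow> Kq) \<Rightarrow> nat \<Rightarrow> Lqz" where
  "mu beta k = ip (pavg (qBC_poly beta k))"

lemma Bhat_mu: "Bhat beta = Abs_fps (mu beta)"
  unfolding Bhat_def mu_def[abs_def] ip_def ..

lemma pderiv_pint: "pderiv (pint p) = p"
proof -
  have "pderiv (pint p) = (\<Sum>i\<le>degree p. monom (coeff p i) i)"
    unfolding pint_def pderiv_sum
    by (intro sum.cong refl) (simp add: pderiv_monom del: of_nat_Suc)
  then show ?thesis by (simp add: poly_as_sum_of_monoms)
qed

lemma pint_at0: "poly (pint p) 0 = 0"
  by (simp add: pint_def poly_sum poly_monom)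

lemma poly_eq_by_deriv:
  fixes F G :: "'a::field_char_0 poly"
  assumes "pderiv F = pderiv G" "poly F 0 = poly G 0"
  shows "F = G"
proof -
  have "pderiv (F - G) = 0" using assms(1) by (simp add: pderiv_diff)
  then have "degree (F - G) = 0" by (simp add: pderiv_eq_0_iff)
  then obtain c where c: "F - G = [:c:]" by (meson degree_eq_zeroE)
  have "c = 0" using arg_cong[OF c, of "\<lambda>p. poly p 0"] assms(2) by simp
  then show ?thesis using c by simp
qed

lemma pint_eq: "pint p = [:0,1:] * pavg p"
proof -
  have "[:0,1:] dvd pint p"
    using dvd_iff_poly_eq_0[of 0 "pint p"] pint_at0[of p] by simp
  then show ?thesis unfolding pavg_def by (rule dvd_mult_div_cancel[symmetric])
qed

lemma ip_pint: "ip (pint (qBC_poly beta k)) = zL * mu beta k"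
  by (simp only: pint_eq ip_mult mu_def zL_ip)

lemma X0_gY: "pcompose X0 gY = 1 + smult [:qK:] X0"
  by (simp add: X0_def gY_def pcompose_pCons algebra_simps one_pCons)

lemma Psi_X0_gY_pow:
  "Psi beta (pcompose (X0 ^ n) gY) = (\<Sum>k\<le>n. smult (of_nat (n choose k) * qK ^ k) (qBC_poly beta k))"
proof -
  have "pcompose (X0 ^ n) gY = (\<Sum>k\<le>n. of_nat (n choose k) * (smult [:qK:] X0) ^ k * 1 ^ (n - k))"
    by (simp add: pcompose_power X0_gY binomial_ring add.commute[of 1])
  also have "\<dots> = (\<Sum>k\<le>n. smult [:of_nat (n choose k) * qK ^ k:] (X0 ^ k))"
    by (intro sum.cong refl) (simp add: smult_power of_nat_poly poly_const_pow)
  finally show ?thesis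
    by (simp add: Psi_sum Psi_smult qBC_poly_def X0_def)
qed

lemma qBC_X0: "qBC_poly beta n = Psi beta (X0 ^ n)"
  by (simp add: qBC_poly_def X0_def)

lemma DER:
  assumes "is_qBC_numbers beta"
  shows "smult qK (\<Sum>k\<le>n. smult (of_nat (n choose k) * qK ^ k) (qBC_poly beta k)) - qBC_poly beta n
       = smult (qK - 1) ([:0,1:] ^ n) + of_nat n * [:0,1:] ^ (n - 1) * [:1, qK - 1:]"
proof -
  have "Psi beta (smult [:qK:] (pcompose (X0 ^ n) gY) - X0 ^ n)
      = smult (qK - 1) (coeff (X0 ^ n) 0) + coeff (X0 ^ n) 1"
    by (rule PsiRec[OF assms])
  moreover have "Psi beta (smult [:qK:] (pcompose (X0 ^ n) gY) - X0 ^ n)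
     = smult qK (\<Sum>k\<le>n. smult (of_nat (n choose k) * qK ^ k) (qBC_poly beta k)) - qBC_poly beta n"
    by (simp add: Psi_diff Psi_smult Psi_X0_gY_pow qBC_X0)
  ultimately show ?thesis by (simp only: X0_coeffs)
qed

lemma INT:
  assumes "is_qBC_numbers beta"
  shows "smult qK (\<Sum>k\<le>n. smult (of_nat (n choose k) * qK ^ k) (pint (qBC_poly beta k))) - pint (qBC_poly beta n)
       = [:1, qK - 1:] * [:0,1:] ^ n - (if n = 0 then 1 else 0)"
proof (rule poly_eq_by_deriv)
  show "pderiv (smult qK (\<Sum>k\<le>n. smult (of_nat (n choose k) * qK ^ k) (pint (qBC_poly beta k))) - pint (qBC_poly beta n))
    = pderiv ([:1, qK - 1:] * [:0,1:] ^ n - (if n = 0 then 1 else 0))"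
  proof -
    have d1: "pderiv ([:0,1:] :: Kq poly) = 1" by (simp add: pderiv_pCons)
    have d2: "pderiv ([:1, qK - 1:] :: Kq poly) = [:qK - 1:]" by (simp add: pderiv_pCons)
    have "pderiv ([:1, qK - 1:] * [:0,1:] ^ n) = [:1, qK - 1:] * smult (of_nat n) ([:0,1:] ^ (n - 1) * 1) + [:0,1:] ^ n * [:qK - 1:]"
      by (simp only: pderiv_mult pderiv_power d1 d2)
    also have "\<dots> = smult (qK - 1) ([:0,1:] ^ n) + of_nat n * [:0,1:] ^ (n - 1) * [:1, qK - 1:]"
      by (simp add: of_nat_poly mult.commute)
    finally have "pderiv ([:1, qK - 1:] * [:0,1:] ^ n - (if n = 0 then 1 else 0)) = smult (qK - 1) ([:0,1:] ^ n) + of_nat n * [:0,1:] ^ (n - 1) * [:1, qK - 1:]"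
      by (simp add: pderiv_diff)
    then show ?thesis
      unfolding pderiv_diff pderiv_smult pderiv_sum pderiv_pint DER[OF assms, symmetric] by simp
  qed
  show "poly (smult qK (\<Sum>k\<le>n. smult (of_nat (n choose k) * qK ^ k) (pint (qBC_poly beta k))) - pint (qBC_poly beta n)) 0
    = poly ([:1, qK - 1:] * [:0,1:] ^ n - (if n = 0 then 1 else 0)) 0"
    by (simp add: poly_sum pint_at0)
qed

lemma MOM:
  assumes "is_qBC_numbers beta"
  shows "zL * (qL * (\<Sum>k\<le>n. of_nat (n choose k) * qL ^ k * mu beta k) - mu beta n)
       = (1 + (qL - 1) * zL) * zL ^ n - (if n = 0 then 1 else 0)"
proof -
  have e1: "ip (smult qK (\<Sum>k\<le>n. smult (of_nat (n choose k) * qK ^ k) (pint (qBC_poly beta k))) - pint (qBC_poly beta n))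
      = qL * (\<Sum>k\<le>n. (of_nat (n choose k) * qL ^ k) * (zL * mu beta k)) - zL * mu beta n"
    by (simp only: ip_diff ip_smult ip_sum ip_pint ic_mult ic_of_nat ic_pow qL_ic)
  have e2: "\<dots> = zL * (qL * (\<Sum>k\<le>n. of_nat (n choose k) * qL ^ k * mu beta k) - mu beta n)"
    by (simp add: sum_distrib_left right_diff_distrib mult_ac)
  have e3: "ip ([:1, qK - 1:] * [:0,1:] ^ n - (if n = 0 then 1 else 0)) = (1 + (qL - 1) * zL) * zL ^ n - (if n = 0 then 1 else 0)"
  proof -
    have "ip [:1, qK - 1:] = 1 + (qL - 1) * zL" by (simp add: ip_pCons qL_ic mult.commute)
    then have "ip ([:1, qK - 1:] * [:0,1:] ^ n) = (1 + (qL - 1) * zL) * zL ^ n"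
      by (simp only: ip_mult ip_pow zL_ip)
    then show ?thesis by (simp only: ip_diff) simp
  qed
  show ?thesis using arg_cong[OF INT[OF assms], of ip] e1 e2 e3 by simp
qed


definition sg :: "Lqz poly" where "sg = [:1, qL:]"
definition wp :: "Lqz poly" where "wp = [:1, qL - 1:]"
definition del :: "Lqz poly \<Rightarrow> Lqz poly" where "del h = (pcompose h sg - h) div wp"
definition Dop :: "Lqz poly \<Rightarrow> Lqz poly" where "Dop p = smult qL (pcompose p sg) - p"

lemma wp_nz [simp]: "wp \<noteq> 0" by (simp add: wp_def)

lemma poly_sg [simp]: "poly sg a = 1 + qL * a" by (simp add: sg_def)
lemma poly_wp [simp]: "poly wp a = 1 + (qL - 1) * a" by (simp add: wp_def)

lemma wp_dvd: "wp dvd (pcompose h sg - h)"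
proof -
  define c where "c = 1 / (qL - 1)"
  have wpc: "wp = smult (qL - 1) [:c, 1:]" by (simp add: wp_def c_def)
  have "1 + qL * (- c) = - c" by (simp add: c_def field_simps)
  then have "poly (pcompose h sg - h) (- c) = 0" by (simp add: poly_pcompose)
  then have "[:c, 1:] dvd (pcompose h sg - h)" by (simp add: dvd_iff_poly_eq_0)
  then show ?thesis unfolding wpc by (rule smult_dvd) simp
qed

lemma wp_del: "wp * del h = pcompose h sg - h"
  unfolding del_def using wp_dvd by (rule dvd_mult_div_cancel)

lemma wp_cancel: "wp * X = wp * Y \<Longrightarrow> X = Y" by simp

lemma del_add: "del (a + b) = del a + del b"
  by (rule wp_cancel) (simp add: wp_del distrib_left pcompose_add)
lemma del_smult: "del (smult c a) = smult c (del a)"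
  by (rule wp_cancel) (simp add: wp_del pcompose_smult smult_diff_right)
lemma del_minus: "del (- a) = - del a"
  by (rule wp_cancel) (simp add: wp_del pcompose_uminus)
lemma del_diff: "del (a - b) = del a - del b"
  by (rule wp_cancel) (simp add: wp_del right_diff_distrib pcompose_diff)
lemma del_const [simp]: "del [:c:] = 0"
  by (rule wp_cancel) (simp add: wp_del)
lemma del_0 [simp]: "del 0 = 0" using del_const[of 0] by simp
lemma del_sum: "del (\<Sum>x\<in>A. f x) = (\<Sum>x\<in>A. del (f x))"
  by (induction A rule: infinite_finite_induct) (simp_all add: del_add)

lemma del_mult: "del (f * g) = pcompose f sg * del g + g * del f"
proof (rule wp_cancel)
  have "wp * (pcompose f sg * del g + g * del f) = pcompose f sg * (wp * del g) + g * (wp * del f)"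
    by (simp add: algebra_simps)
  also have "\<dots> = wp * del (f * g)"
    unfolding wp_del by (simp add: pcompose_mult algebra_simps)
  finally show "wp * del (f * g) = wp * (pcompose f sg * del g + g * del f)" by simp
qed

lemma wp_sg: "pcompose wp sg = smult qL wp"
  by (simp add: wp_def sg_def pcompose_pCons algebra_simps)

lemma del_wp: "del (wp * p) = Dop p"
  by (rule wp_cancel) (simp add: wp_del pcompose_mult wp_sg Dop_def algebra_simps)


lemma zL_nz [simp]: "zL \<noteq> 0" by (simp add: zL_ip)

lemma Dop_add: "Dop (a + b) = Dop a + Dop b" by (simp add: Dop_def pcompose_add smult_add_right)
lemma Dop_smult: "Dop (smult c a) = smult c (Dop a)" by (simp add: Dop_def pcompose_smult smult_diff_right mult.commute)
lemma Dop_0 [simp]: "Dop 0 = 0" by (simp add: Dop_def)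
lemma Dop_sum: "Dop (\<Sum>x\<in>A. f x) = (\<Sum>x\<in>A. Dop (f x))"
  by (induction A rule: infinite_finite_induct) (simp_all add: Dop_add)

lemma sg_power: "sg ^ n = (\<Sum>k\<le>n. monom (of_nat (n choose k) * qL ^ k) k)"
proof -
  have e: "sg = monom qL 1 + 1" by (simp add: sg_def monom_Suc monom_0 one_pCons)
  have "sg ^ n = (\<Sum>k\<le>n. of_nat (n choose k) * monom qL 1 ^ k * 1 ^ (n - k))"
    unfolding e by (rule binomial_ring)
  also have "\<dots> = (\<Sum>k\<le>n. monom (of_nat (n choose k) * qL ^ k) k)"
    by (intro sum.cong refl) (simp add: monom_power of_nat_poly smult_monom)
  finally show ?thesis .
qed

locale qbc =
  fixes beta :: "nat \<Rightarrow> Kq"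
  assumes A: "is_qBC_numbers beta"
begin

definition Phi :: "Lqz poly \<Rightarrow> Lqz" where
  "Phi p = (\<Sum>k\<le>degree p. coeff p k * mu beta k)"

lemma Phi_bound:
  assumes "degree p \<le> N"
  shows "Phi p = (\<Sum>k\<le>N. coeff p k * mu beta k)"
  unfolding Phi_def
  by (rule sum.mono_neutral_left) (use assms in \<open>auto simp: coeff_eq_0\<close>)

lemma Phi_add: "Phi (p + q) = Phi p + Phi q"
proof -
  let ?N = "max (degree p) (degree q)"
  have "degree (p + q) \<le> ?N" by (rule degree_add_le) auto
  then show ?thesis
    by (simp add: Phi_bound[of _ ?N] Phi_bound[of p ?N] Phi_bound[of q ?N] sum.distrib distrib_right)
qed
lemma Phi_0 [simp]: "Phi 0 = 0" by (simp add: Phi_def)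
lemma Phi_minus: "Phi (- p) = - Phi p" by (simp add: Phi_def sum_negf)
lemma Phi_diff: "Phi (p - q) = Phi p - Phi q"
  using Phi_add[of p "-q"] by (simp add: Phi_minus)
lemma Phi_smult: "Phi (smult c p) = c * Phi p"
proof (cases "c = 0")
  case False
  then show ?thesis by (simp add: Phi_def sum_distrib_left mult.assoc)
qed simp
lemma Phi_sum: "Phi (\<Sum>x\<in>A. f x) = (\<Sum>x\<in>A. Phi (f x))"
  by (induction A rule: infinite_finite_induct) (simp_all add: Phi_add)
lemma Phi_monom: "Phi (monom c k) = c * mu beta k"
proof -
  have "Phi (monom c k) = (\<Sum>i\<le>k. coeff (monom c k) i * mu beta i)"
    by (rule Phi_bound) (simp add: degree_monom_le)
  also have "\<dots> = (\<Sum>i\<le>k. if i = k then c * mu beta k else 0)"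
    by (intro sum.cong refl) (auto simp: coeff_monom)
  finally show ?thesis by simp
qed
lemma Phi_const: "Phi [:c:] = c * mu beta 0"
  using Phi_monom[of c 0] by (simp add: monom_0)

lemma Phi_sg_pow: "Phi (sg ^ n) = (\<Sum>k\<le>n. of_nat (n choose k) * qL ^ k * mu beta k)"
  by (simp add: sg_power Phi_sum Phi_monom)

lemma Phi_Dop_monom: "zL * Phi (Dop (monom 1 n)) = poly wp zL * zL ^ n - (if n = 0 then 1 else 0)"
proof -
  have "Dop (monom 1 n) = smult qL (sg ^ n) - monom 1 n"
    by (simp add: Dop_def pcompose_monom)
  then have "Phi (Dop (monom 1 n)) = qL * (\<Sum>k\<le>n. of_nat (n choose k) * qL ^ k * mu beta k) - mu beta n"
    by (simp add: Phi_diff Phi_smult Phi_sg_pow Phi_monom)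
  then show ?thesis using MOM[OF A, of n] by simp
qed

lemma Phi_Dop: "zL * Phi (Dop p) = poly wp zL * poly p zL - poly p 0"
proof -
  let ?m = "\<lambda>i. smult (coeff p i) (monom 1 i)"
  have p: "p = (\<Sum>i\<le>degree p. ?m i)"
    by (simp add: smult_monom poly_as_sum_of_monoms)
  have "zL * Phi (Dop p) = (\<Sum>i\<le>degree p. coeff p i * (zL * Phi (Dop (monom 1 i))))"
    by (subst p) (simp add: Dop_sum Phi_sum Dop_smult Phi_smult sum_distrib_left mult_ac)
  also have "\<dots> = (\<Sum>i\<le>degree p. coeff p i * (poly wp zL * zL ^ i - (if i = 0 then 1 else 0)))"
    by (simp add: Phi_Dop_monom)
  also have "\<dots> = poly wp zL * (\<Sum>i\<le>degree p. coeff p i * zL ^ i) - coeff p 0"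
  proof -
    have "\<And>i. coeff p i * (poly wp zL * zL ^ i - (if i = 0 then 1 else 0))
       = poly wp zL * (coeff p i * zL ^ i) - (if i = 0 then coeff p i else 0)"
      by (simp add: algebra_simps)
    then show ?thesis by (simp only: sum_subtractf sum_distrib_left[symmetric]) simp
  qed
  also have "\<dots> = poly wp zL * poly p zL - poly p 0"
    by (simp add: poly_altdef poly_0_coeff_0)
  finally show ?thesis .
qed

lemma Phi_del: "zL * Phi (del h) = poly h zL - poly h 0"
proof -
  obtain c where c: "h mod wp = [:c:]"
  proof -
    have "degree (h mod wp) = 0"
      using degree_mod_less[of wp h] by (auto simp: wp_def)
    then show ?thesis using that by (meson degree_eq_zeroE)
  qed
  have h: "h = wp * (h div wp) + [:c:]" using c by (metis div_mult_mod_eq mult.commute)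
  have "del h = Dop (h div wp)"
    by (subst h) (simp add: del_add del_wp)
  then have "zL * Phi (del h) = poly wp zL * poly (h div wp) zL - poly (h div wp) 0"
    by (simp add: Phi_Dop)
  also have "\<dots> = poly h zL - poly h 0"
    by (subst (3 4) h) (simp add: wp_def algebra_simps)
  finally show ?thesis .
qed

lemma Phi_del': "Phi (del h) = (poly h zL - poly h 0) / zL"
  using Phi_del[of h] by (simp add: field_simps)

end


lemma qint_0 [simp]: "qint q 0 = 0" by (simp add: qint_def)
lemma qint_mult: "(q::'a::field) \<noteq> 1 \<Longrightarrow> qint q n * (q - 1) = q ^ n - 1"
  by (simp add: qint_def)
lemma qint_eqI: "(q::'a::field) \<noteq> 1 \<Longrightarrow> a * (q - 1) = b * (q - 1) \<Longrightarrow> a = b"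
  by simp
lemma qint_1 [simp]: "(q::'a::field) \<noteq> 1 \<Longrightarrow> qint q 1 = 1" by (simp add: qint_def)
lemma qint_Suc0 [simp]: "(q::'a::field) \<noteq> 1 \<Longrightarrow> qint q (Suc 0) = 1" by (simp add: qint_def)
lemma qint_add:
  fixes q :: "'a::field" assumes q: "q \<noteq> 1"
  shows "qint q (m + n) = qint q m + q ^ m * qint q n"
proof (rule qint_eqI[OF q])
  have a: "qint q m * (q - 1) = q ^ m - 1" and b: "qint q n * (q - 1) = q ^ n - 1"
    using q by (simp_all add: qint_mult)
  have "(qint q m + q ^ m * qint q n) * (q - 1) = qint q m * (q - 1) + q ^ m * (qint q n * (q - 1))"
    by (simp add: algebra_simps)
  also have "\<dots> = q ^ (m + n) - 1" unfolding a b by (simp add: power_add algebra_simps)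
  finally show "qint q (m + n) * (q - 1) = (qint q m + q ^ m * qint q n) * (q - 1)"
    using q by (simp add: qint_mult)
qed
lemma qint_Suc:
  fixes q :: "'a::field" assumes q: "q \<noteq> 1" shows "qint q (Suc n) = 1 + q * qint q n"
  using qint_add[OF q, of 1 n] q by simp
lemma qint_Suc':
  fixes q :: "'a::field" assumes q: "q \<noteq> 1" shows "qint q (Suc n) = qint q n + q ^ n"
  using qint_add[OF q, of n 1] q by simp

fun node :: "Lqz \<Rightarrow> nat \<Rightarrow> Lqz" where
  "node a 0 = a"
| "node a (Suc i) = 1 + qL * node a i"

lemma node_closed: "node a i = qL ^ i * a + qint qL i"
proof (induction i)
  case (Suc i)
  have "node a (Suc i) = 1 + qL * (qL ^ i * a + qint qL i)" by (simp only: node.simps Suc)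
  also have "\<dots> = qL ^ Suc i * a + qint qL (Suc i)" by (simp add: qint_Suc algebra_simps)
  finally show ?case .
qed simp

definition pr :: "Lqz \<Rightarrow> nat \<Rightarrow> Lqz poly" where
  "pr a m = (\<Prod>i<m. [:- node a i, 1:])"

lemma pr_0 [simp]: "pr a 0 = 1" by (simp add: pr_def)
lemma pr_Suc: "pr a (Suc m) = pr a m * [:- node a m, 1:]" by (simp add: pr_def)

lemma pr_vanish: "i < m \<Longrightarrow> poly (pr a m) (node a i) = 0"
  by (induction m) (auto simp: pr_Suc less_Suc_eq)

lemma pr_comp: "pcompose (pr a (Suc m)) sg = [:1 - a, qL:] * smult (qL ^ m) (pr a m)"
proof (induction m)
  case 0 then show ?case by (simp add: pr_def sg_def pcompose_pCons)
next
  case (Suc m)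
  have l: "pcompose [:- node a (Suc m), 1:] sg = smult qL [:- node a m, 1:]"
    by (simp add: sg_def pcompose_pCons algebra_simps)
  have "pcompose (pr a (Suc (Suc m))) sg = pcompose (pr a (Suc m)) sg * pcompose [:- node a (Suc m), 1:] sg"
    by (simp only: pr_Suc[of a "Suc m"] pcompose_mult)
  also have "\<dots> = ([:1 - a, qL:] * smult (qL ^ m) (pr a m)) * smult qL [:- node a m, 1:]"
    by (simp only: Suc l)
  also have "\<dots> = [:1 - a, qL:] * smult (qL ^ Suc m) (pr a (Suc m))"
    by (simp only: pr_Suc[of a m] mult_smult_left mult_smult_right smult_smult mult_ac power_Suc)
  finally show ?case .
qed

lemma del_pr: "del (pr a (Suc m)) = smult (qint qL (Suc m)) (pr a m)"
proof (rule wp_cancel)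
  have "wp * del (pr a (Suc m)) = [:1 - a, qL:] * smult (qL ^ m) (pr a m) - pr a m * [:- node a m, 1:]"
    by (simp only: wp_del pr_comp) (simp only: pr_Suc)
  also have "\<dots> = pr a m * (smult (qL ^ m) [:1 - a, qL:] - [:- node a m, 1:])"
    by (simp only: right_diff_distrib mult_smult_right mult_smult_left mult.commute)
  also have "smult (qL ^ m) [:1 - a, qL:] - [:- node a m, 1:] = smult (qint qL (Suc m)) wp"
  proof -
    have "qL ^ m * (1 - a) + node a m = qint qL (Suc m)" by (simp add: node_closed qint_Suc' algebra_simps)
    moreover have "qL ^ m * qL - 1 = qint qL (Suc m) * (qL - 1)" by (simp add: qint_mult)
    ultimately show ?thesis by (simp add: wp_def)
  qed
  finally show "wp * del (pr a (Suc m)) = wp * smult (qint qL (Suc m)) (pr a m)"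
    by (simp add: mult_ac del: mult_pCons_left mult_pCons_right)
qed

lemma poly_wp_node: "poly wp (node a i) = qL ^ i * poly wp a"
proof (induction i)
  case (Suc i)
  have "poly wp (node a (Suc i)) = qL * poly wp (node a i)" by (simp add: algebra_simps)
  then show ?case using Suc by simp
qed simp

lemma del_vanish:
  assumes "poly wp a \<noteq> 0" "\<And>i. i < Suc m \<Longrightarrow> poly h (node a i) = 0" "i < m"
  shows "poly (del h) (node a i) = 0"
proof -
  have "poly (wp * del h) (node a i) = poly h (node a (Suc i)) - poly h (node a i)"
    by (simp add: wp_del poly_pcompose)
  also have "\<dots> = 0" using assms(2)[of "Suc i"] assms(2)[of i] assms(3) by simp
  moreover have "poly wp (node a i) \<noteq> 0" using assms(1) by (simp only: poly_wp_node) simp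
  ultimately show ?thesis by simp
qed

lemma dels_vanish:
  assumes "poly wp a \<noteq> 0" "\<And>i. i < m \<Longrightarrow> poly h (node a i) = 0" "i + j < m"
  shows "poly ((del ^^ j) h) (node a i) = 0"
  using assms(2,3)
proof (induction j arbitrary: i)
  case 0 then show ?case by simp
next
  case (Suc j)
  have "poly (del ((del ^^ j) h)) (node a i) = 0"
    by (rule del_vanish[OF assms(1), where m = "m - Suc j"]) (use Suc in auto)
  then show ?case by simp
qed

lemma degree_del_le: "degree (del h) \<le> degree h - 1"
proof (cases "del h = 0")
  case False
  have "degree wp = 1" by (simp add: wp_def)
  then have "degree (wp * del h) = 1 + degree (del h)"
    using degree_mult_eq[OF wp_nz False] by simp
  moreover have "degree (wp * del h) \<le> degree h"
    unfolding wp_del by (rule degree_diff_le) (simp_all add: degree_pcompose sg_def)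
  ultimately show ?thesis by simp
qed simp

lemma del_lc:
  assumes "degree h > 0"
  shows "coeff (del h) (degree h - 1) = qint qL (degree h) * lead_coeff h"
proof -
  let ?d = "degree h"
  have c0: "coeff (del h) ?d = 0"
    using degree_del_le[of h] assms by (intro coeff_eq_0) simp
  have "coeff (wp * del h) ?d = (qL - 1) * coeff (del h) (?d - 1) + coeff (del h) ?d"
    using assms by (cases ?d) (simp_all add: wp_def coeff_pCons)
  also have "coeff (wp * del h) ?d = lead_coeff h * (qL ^ ?d - 1)"
  proof -
    have "coeff (pcompose h sg) ?d = lead_coeff h * qL ^ ?d"
      using lead_coeff_comp[of sg h] degree_pcompose[of h sg] by (simp add: sg_def)
    then show ?thesis by (simp add: wp_del algebra_simps)
  qed
  finally show ?thesis using c0 by (simp add: qint_def field_simps)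
qed

lemma degree_del:
  assumes "degree h > 0"
  shows "degree (del h) = degree h - 1"
proof -
  have "coeff (del h) (degree h - 1) \<noteq> 0"
    using del_lc[OF assms] assms qint_nz[of "degree h"] by (cases "h = 0") simp_all
  then have "degree (del h) \<ge> degree h - 1" by (rule le_degree)
  then show ?thesis using degree_del_le[of h] by simp
qed

lemma lc_del:
  assumes "degree h > 0"
  shows "lead_coeff (del h) = qint qL (degree h) * lead_coeff h"
  using del_lc[OF assms] degree_del[OF assms] by simp


definition sgi :: "Lqz poly" where "sgi = [: - 1 / qL, 1 / qL :]"
definition Eop :: "Lqz poly \<Rightarrow> Lqz poly" where "Eop f = del (pcompose f sgi)"

lemma sgi_sg: "pcompose sgi sg = [:0, 1:]"
  by (simp add: sgi_def sg_def pcompose_pCons field_simps)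

lemma comp_sgi_sg: "pcompose (pcompose f sgi) sg = f"
  by (simp add: pcompose_assoc[symmetric] sgi_sg)

lemma degree_sgi: "degree (pcompose f sgi) = degree f"
  by (simp add: degree_pcompose sgi_def)

lemma lc_sgi: "lead_coeff (pcompose f sgi) = lead_coeff f * (1 / qL) ^ degree f"
  using lead_coeff_comp[of sgi f] by (simp add: sgi_def)

lemma Eop_0 [simp]: "Eop 0 = 0" by (simp add: Eop_def)

lemma Eop_deg0: "degree f = 0 \<Longrightarrow> Eop f = 0"
  by (auto simp: Eop_def elim!: degree_eq_zeroE)

lemma degree_Eop_le: "degree (Eop f) \<le> degree f - 1"
  using degree_del_le[of "pcompose f sgi"] by (simp add: Eop_def degree_sgi)

lemma Eop_iter_zero: "degree f < j \<Longrightarrow> (Eop ^^ j) f = 0"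
proof (induction j arbitrary: f)
  case 0 then show ?case by simp
next
  case (Suc j)
  have e: "(Eop ^^ Suc j) f = (Eop ^^ j) (Eop f)" by (simp add: funpow_Suc_right del: funpow.simps)
  show ?case
  proof (cases "degree f = 0")
    case True
    then have "Eop f = 0" by (rule Eop_deg0)
    moreover have "(Eop ^^ j) 0 = 0" for j by (induction j) simp_all
    ultimately show ?thesis using e by simp
  next
    case False
    then have "degree (Eop f) < j" using degree_Eop_le[of f] Suc.prems by simp
    then show ?thesis using e Suc.IH by simp
  qed
qed

fun kap :: "nat \<Rightarrow> Lqz" where
  "kap 0 = 1"
| "kap (Suc n) = qint qL (Suc n) / qL ^ Suc n * kap n"

lemma Eop_iter_lc: "degree f = n \<Longrightarrow> (Eop ^^ n) f = [: lead_coeff f * kap n :]"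
proof (induction n arbitrary: f)
  case 0 then show ?case by (auto elim!: degree_eq_zeroE)
next
  case (Suc n)
  have e: "(Eop ^^ Suc n) f = (Eop ^^ n) (Eop f)" by (simp add: funpow_Suc_right del: funpow.simps)
  have dg: "degree (pcompose f sgi) = Suc n" using Suc.prems by (simp add: degree_sgi)
  have d: "degree (Eop f) = n" using degree_del[of "pcompose f sgi"] dg by (simp add: Eop_def)
  have l: "lead_coeff (Eop f) = qint qL (Suc n) * (lead_coeff f * (1 / qL) ^ Suc n)"
    using lc_del[of "pcompose f sgi"] dg lc_sgi[of f] Suc.prems by (simp add: Eop_def)
  show ?case unfolding e Suc.IH[OF d] l by (simp add: field_simps)
qed

lemma degree_lc_pr: "degree (pr a m) = m \<and> lead_coeff (pr a m) = 1"
proof (induction m)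
  case (Suc m)
  have nz: "pr a m \<noteq> 0" using Suc by auto
  have L: "[:- node a m, 1:] \<noteq> 0" "degree [:- node a m, 1:] = 1" "lead_coeff [:- node a m, 1:] = 1" by simp_all
  show ?case unfolding pr_Suc
    using degree_mult_eq[OF nz L(1)] lead_coeff_mult[of "pr a m" "[:- node a m, 1:]"] Suc L
    by (auto simp del: mult_pCons_right mult_pCons_left pCons_eq_0_iff)
qed simp

lemma degree_pr: "degree (pr a m) = m" using degree_lc_pr by blast
lemma lc_pr: "lead_coeff (pr a m) = 1" using degree_lc_pr by blast

definition lcf :: "nat \<Rightarrow> nat \<Rightarrow> Lqz" where "lcf D j = (\<Prod>i<j. qint qL (D - i))"

lemma dels_degree_lc:
  assumes "j \<le> degree h"
  shows "degree ((del ^^ j) h) = degree h - j \<and> lead_coeff ((del ^^ j) h) = lcf (degree h) j * lead_coeff h"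
  using assms
proof (induction j)
  case 0 then show ?case by (simp add: lcf_def)
next
  case (Suc j)
  then have IH: "degree ((del ^^ j) h) = degree h - j" "lead_coeff ((del ^^ j) h) = lcf (degree h) j * lead_coeff h" by auto
  have pos: "degree ((del ^^ j) h) > 0" using IH(1) Suc.prems by simp
  show ?case
    using degree_del[OF pos] lc_del[OF pos] IH Suc.prems
    by (simp add: lcf_def mult_ac)
qed


lemma qL_ic_m1: "qL - 1 = ic (qK - 1)" by (simp add: qL_ic)

lemma wp_zL_nz: "poly wp zL \<noteq> 0"
proof -
  have "poly wp zL = ic 1 + ic (qK - 1) * zL" by (simp add: qL_ic)
  also have "\<dots> \<noteq> 0" by (rule lin_nz) (simp add: qK_ne1)
  finally show ?thesis .
qed

lemma wp_0_nz: "poly wp 0 \<noteq> 0" by simp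

definition gP :: "nat \<Rightarrow> Lqz poly" where "gP n = pr 0 n * pr zL n"
definition gK :: "nat \<Rightarrow> Lqz poly" where "gK n = pr 0 (Suc n) * pr zL n"
definition Pt :: "nat \<Rightarrow> Lqz poly" where "Pt n = (del ^^ n) (gP n)"
definition KtU :: "nat \<Rightarrow> Lqz poly" where "KtU n = (del ^^ n) (gK n)"
definition Kt :: "nat \<Rightarrow> Lqz poly" where "Kt n = KtU n div [:0, 1:]"

lemma gP_van0: "i < n \<Longrightarrow> poly (gP n) (node 0 i) = 0" by (simp add: gP_def pr_vanish)
lemma gP_vanz: "i < n \<Longrightarrow> poly (gP n) (node zL i) = 0" by (simp add: gP_def pr_vanish)
lemma gK_van0: "i < Suc n \<Longrightarrow> poly (gK n) (node 0 i) = 0" by (simp add: gK_def pr_vanish)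
lemma gK_vanz: "i < n \<Longrightarrow> poly (gK n) (node zL i) = 0" by (simp add: gK_def pr_vanish)

lemma gP_dels_van: "i < n \<Longrightarrow> poly ((del ^^ i) (gP n)) 0 = 0 \<and> poly ((del ^^ i) (gP n)) zL = 0"
  using dels_vanish[OF wp_0_nz, of n "gP n" 0 i] dels_vanish[OF wp_zL_nz, of n "gP n" 0 i]
    gP_van0 gP_vanz by simp

lemma gK_dels_van: "i < n \<Longrightarrow> poly ((del ^^ i) (gK n)) 0 = 0 \<and> poly ((del ^^ i) (gK n)) zL = 0"
  using dels_vanish[OF wp_0_nz, of "Suc n" "gK n" 0 i] dels_vanish[OF wp_zL_nz, of n "gK n" 0 i]
    gK_van0 gK_vanz by simp

lemma KtU_0: "poly (KtU n) 0 = 0"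
  using dels_vanish[OF wp_0_nz, of "Suc n" "gK n" 0 n] gK_van0 by (simp add: KtU_def)

lemma KtU_Kt: "KtU n = [:0, 1:] * Kt n"
proof -
  have "[:0,1:] dvd KtU n" using dvd_iff_poly_eq_0[of 0 "KtU n"] KtU_0 by simp
  then show ?thesis unfolding Kt_def by (rule dvd_mult_div_cancel[symmetric])
qed

lemma pr_nz: "pr a m \<noteq> 0" using lc_pr[of a m] by auto

lemma degree_gP: "degree (gP n) = 2 * n"
  unfolding gP_def using degree_mult_eq[OF pr_nz pr_nz, of 0 n zL n] by (simp add: degree_pr)
lemma lc_gP: "lead_coeff (gP n) = 1"
  unfolding gP_def by (simp add: lead_coeff_mult lc_pr)
lemma degree_gK: "degree (gK n) = 2 * n + 1"
  unfolding gK_def using degree_mult_eq[OF pr_nz pr_nz, of 0 "Suc n" zL n] by (simp add: degree_pr)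
lemma lc_gK: "lead_coeff (gK n) = 1"
  unfolding gK_def by (simp add: lead_coeff_mult lc_pr)

lemma lc_gP': "coeff (gP n) (2 * n) = 1" using lc_gP[of n] degree_gP[of n] by simp
lemma lc_gK': "coeff (gK n) (2 * n + 1) = 1" using lc_gK[of n] degree_gK[of n] by simp

lemma Pt_deg_lc: "degree (Pt n) = n \<and> lead_coeff (Pt n) = lcf (2 * n) n"
  using dels_degree_lc[of n "gP n"] by (auto simp add: Pt_def degree_gP lc_gP')

lemma KtU_deg_lc: "degree (KtU n) = Suc n \<and> lead_coeff (KtU n) = lcf (2 * n + 1) n"
  using dels_degree_lc[of n "gK n"] lc_gK'[of n] by (auto simp add: KtU_def degree_gK)

lemma Kt_deg_lc: "degree (Kt n) = n \<and> lead_coeff (Kt n) = lcf (2 * n + 1) n"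
proof -
  have nz: "Kt n \<noteq> 0" using KtU_deg_lc[of n] KtU_Kt[of n] by auto
  have "degree (KtU n) = 1 + degree (Kt n)"
    unfolding KtU_Kt using degree_mult_eq[OF _ nz, of "[:0,1:]"] by simp
  moreover have "lead_coeff (KtU n) = lead_coeff (Kt n)"
    unfolding KtU_Kt by (simp add: lead_coeff_mult)
  ultimately show ?thesis using KtU_deg_lc[of n] by auto
qed


context qbc
begin

lemma mu0: "mu beta 0 = 1"
proof -
  have "zL * (qL * mu beta 0 - mu beta 0) = (1 + (qL - 1) * zL) - 1"
    using MOM[OF A, of 0] by simp
  then have "(qL - 1) * (zL * mu beta 0) = (qL - 1) * zL" by (simp add: algebra_simps)
  then have "zL * mu beta 0 = zL" by simp
  then show ?thesis by simp
qed

lemma Phi_1: "Phi 1 = 1"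
  using Phi_const[of 1] mu0 by (simp add: one_pCons)

lemma Phi_mult_const: "Phi (G * [:c:]) = c * Phi G"
  by (simp add: Phi_smult)

lemma SBP:
  assumes "poly G 0 = 0" "poly G zL = 0"
  shows "Phi (pcompose f sg * del G) = - Phi (G * del f)"
proof -
  have "Phi (del (f * G)) = 0" using assms by (simp add: Phi_del')
  then show ?thesis by (simp add: del_mult Phi_add eq_neg_iff_add_eq_0)
qed

lemma Iter:
  assumes "\<And>i. i < j \<Longrightarrow> poly ((del ^^ i) G) 0 = 0 \<and> poly ((del ^^ i) G) zL = 0"
  shows "Phi (f * (del ^^ j) G) = (- 1) ^ j * Phi (G * (Eop ^^ j) f)"
  using assms
proof (induction j arbitrary: f)
  case 0 then show ?case by (simp add: mult.commute)
next
  case (Suc j)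
  have v: "poly ((del ^^ j) G) 0 = 0" "poly ((del ^^ j) G) zL = 0" using Suc.prems[of j] by auto
  have "Phi (f * (del ^^ Suc j) G) = Phi (pcompose (pcompose f sgi) sg * del ((del ^^ j) G))"
    by (simp add: comp_sgi_sg)
  also have "\<dots> = - Phi ((del ^^ j) G * Eop f)"
    unfolding Eop_def by (rule SBP[OF v])
  also have "\<dots> = - ((- 1) ^ j * Phi (G * (Eop ^^ j) (Eop f)))"
    using Suc.IH[of "Eop f"] Suc.prems by (simp add: mult.commute)
  also have "(Eop ^^ j) (Eop f) = (Eop ^^ Suc j) f" by (simp add: funpow_Suc_right del: funpow.simps)
  finally show ?case by simp
qed

definition J :: "nat \<Rightarrow> nat \<Rightarrow> Lqz" where "J a b = Phi (pr 0 a * pr zL b)"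

lemma Pt_orth: "degree f < n \<Longrightarrow> Phi (f * Pt n) = 0"
  unfolding Pt_def using Iter[of n "gP n" f] gP_dels_van Eop_iter_zero by simp

lemma KtU_orth: "degree f < n \<Longrightarrow> Phi (f * KtU n) = 0"
  unfolding KtU_def using Iter[of n "gK n" f] gK_dels_van Eop_iter_zero by simp

lemma monom1_deg_lc: "degree (monom (1::Lqz) n) = n" "lead_coeff (monom (1::Lqz) n) = 1"
  by (simp_all add: degree_monom_eq)

lemma Eop_monom1: "(Eop ^^ n) (monom 1 n) = [: kap n :]"
  using Eop_iter_lc[OF monom1_deg_lc(1)] monom1_deg_lc(2) by simp

lemma Pt_diag: "Phi (monom 1 n * Pt n) = (- 1) ^ n * kap n * J n n"
proof -
  have "Phi (monom 1 n * Pt n) = (- 1) ^ n * Phi (gP n * (Eop ^^ n) (monom 1 n))"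
    unfolding Pt_def by (rule Iter) (rule gP_dels_van)
  then show ?thesis by (simp add: Eop_monom1 Phi_mult_const Phi_smult J_def gP_def)
qed

lemma KtU_diag: "Phi (monom 1 n * KtU n) = (- 1) ^ n * kap n * J (Suc n) n"
proof -
  have "Phi (monom 1 n * KtU n) = (- 1) ^ n * Phi (gK n * (Eop ^^ n) (monom 1 n))"
    unfolding KtU_def by (rule Iter) (rule gK_dels_van)
  then show ?thesis by (simp add: Eop_monom1 Phi_mult_const Phi_smult J_def gK_def)
qed

end


lemma lin_decomp: "[:l0, l1:] = smult l1 [:- x, 1:] + [:l0 + l1 * x:]" for l0 l1 x :: Lqz
proof -
  have "smult l1 [:- x, 1:] = [:- (l1 * x), l1:]" by simp
  then show ?thesis by simp
qed

lemma node0: "node 0 a = qint qL a" by (simp add: node_closed)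

lemma qsum1: "qL ^ a * qint qL (Suc b) * qL + qint qL (Suc a) = qint qL (Suc (Suc (a + b)))"
proof -
  have "qint qL (Suc a + Suc b) = qint qL (Suc a) + qL ^ Suc a * qint qL (Suc b)"
    by (rule qint_add) simp
  moreover have "Suc a + Suc b = Suc (Suc (a + b))" by simp
  ultimately show ?thesis by (simp add: algebra_simps)
qed

lemma qsum2: "qL ^ a * qint qL (Suc b) + qint qL a - qint qL b = qL ^ b * qint qL (Suc a)"
proof -
  have h1: "qint qL (a + Suc b) = qint qL a + qL ^ a * qint qL (Suc b)" by (rule qint_add) simp
  have h2: "qint qL (b + Suc a) = qint qL b + qL ^ b * qint qL (Suc a)" by (rule qint_add) simp
  have "a + Suc b = b + Suc a" by simp
  with h1 h2 show ?thesis by (simp add: algebra_simps)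
qed

context qbc
begin

lemma J_lin: "Phi (pr 0 a * pr zL b * (smult (qL ^ a * qint qL (Suc b)) [:1, qL:] + smult (qint qL (Suc a)) [:- node zL b, 1:])) = 0"
proof -
  let ?h = "pr 0 (Suc a) * pr zL (Suc b)"
  have v0: "poly ?h 0 = 0" using pr_vanish[of 0 "Suc a" 0] by simp
  have vz: "poly ?h zL = 0" using pr_vanish[of 0 "Suc b" zL] by simp
  have "Phi (del ?h) = 0" by (simp only: Phi_del' v0 vz) simp
  moreover have "del ?h = pr 0 a * pr zL b * (smult (qL ^ a * qint qL (Suc b)) [:1, qL:] + smult (qint qL (Suc a)) [:- node zL b, 1:])"
  proof -
    have "del ?h = ([:1 - 0, qL:] * smult (qL ^ a) (pr 0 a)) * smult (qint qL (Suc b)) (pr zL b)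
        + (pr zL b * [:- node zL b, 1:]) * smult (qint qL (Suc a)) (pr 0 a)"
      by (simp only: del_mult, simp only: pr_comp del_pr, simp only: pr_Suc[of zL b])
    also have "\<dots> = pr 0 a * pr zL b * (smult (qL ^ a * qint qL (Suc b)) [:1, qL:] + smult (qint qL (Suc a)) [:- node zL b, 1:])"
      by (simp only: distrib_left mult_smult_left mult_smult_right smult_smult mult_ac diff_zero)
    finally show ?thesis .
  qed
  ultimately show ?thesis by simp
qed

lemma J_step:
  "Phi (pr 0 a * pr zL b * [:- x, 1:]) * qint qL (Suc (Suc (a + b)))
   + Phi (pr 0 a * pr zL b) * (qL ^ a * qint qL (Suc b) * (1 + qL * x) + qint qL (Suc a) * (x - node zL b)) = 0"
proof -
  define l0 where "l0 = qL ^ a * qint qL (Suc b) - qint qL (Suc a) * node zL b"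
  define l1 where "l1 = qL ^ a * qint qL (Suc b) * qL + qint qL (Suc a)"
  have L: "smult (qL ^ a * qint qL (Suc b)) [:1, qL:] + smult (qint qL (Suc a)) [:- node zL b, 1:] = [:l0, l1:]"
    by (simp add: l0_def l1_def algebra_simps)
  have l1: "l1 = qint qL (Suc (Suc (a + b)))" unfolding l1_def by (rule qsum1)
  have "0 = Phi (pr 0 a * pr zL b * (smult l1 [:- x, 1:] + [:l0 + l1 * x:]))"
    using J_lin[of a b] unfolding L lin_decomp[of l0 l1 x] by simp
  also have "\<dots> = l1 * Phi (pr 0 a * pr zL b * [:- x, 1:]) + (l0 + l1 * x) * Phi (pr 0 a * pr zL b)"
    by (simp only: distrib_left mult_smult_right Phi_add Phi_smult Phi_mult_const)
  finally show ?thesis unfolding l1[symmetric]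
    by (simp add: l0_def l1_def algebra_simps)
qed

lemma J_a: "qint qL (Suc (Suc (a + b))) * J (Suc a) b = - (qint qL (Suc a) * qL ^ b * (qint qL (Suc a) - zL)) * J a b"
proof -
  have e: "pr 0 a * pr zL b * [:- node 0 a, 1:] = pr 0 (Suc a) * pr zL b" by (simp add: pr_Suc mult_ac del: mult_pCons_right mult_pCons_left)
  have r: "qL ^ a * qint qL (Suc b) * (1 + qL * node 0 a) + qint qL (Suc a) * (node 0 a - node zL b)
      = qint qL (Suc a) * qL ^ b * (qint qL (Suc a) - zL)"
  proof -
    have "qL ^ a * qint qL (Suc b) * (1 + qL * node 0 a) + qint qL (Suc a) * (node 0 a - node zL b)
       = qint qL (Suc a) * ((qL ^ a * qint qL (Suc b) + qint qL a - qint qL b) - qL ^ b * zL)"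
      by (simp add: node0 node_closed qint_Suc[symmetric] algebra_simps)
    also have "\<dots> = qint qL (Suc a) * qL ^ b * (qint qL (Suc a) - zL)"
      unfolding qsum2 by (simp add: algebra_simps)
    finally show ?thesis .
  qed
  show ?thesis using J_step[of a b "node 0 a"] unfolding e r J_def
    by (simp add: algebra_simps eq_neg_iff_add_eq_0)
qed

lemma J_b: "qint qL (Suc (Suc (a + b))) * J a (Suc b) = - (qL ^ a * qint qL (Suc b) * node zL (Suc b)) * J a b"
proof -
  have e: "pr 0 a * pr zL b * [:- node zL b, 1:] = pr 0 a * pr zL (Suc b)" by (simp add: pr_Suc mult_ac del: mult_pCons_right mult_pCons_left)
  show ?thesis using J_step[of a b "node zL b"] unfolding e J_def
    by (simp add: algebra_simps eq_neg_iff_add_eq_0)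
qed

end


lemma nz_qint_minus_z: "qint qL m - zL \<noteq> 0"
proof -
  have "qint qL m - zL = ic (qint qK m) + ic (- 1) * zL" by (simp add: qint_ic)
  also have "\<dots> \<noteq> 0" by (rule lin_nz) simp
  finally show ?thesis .
qed

lemma nz_node_z: "node zL m \<noteq> 0"
proof -
  have "node zL m = ic (qint qK m) + ic (qK ^ m) * zL"
    by (simp only: node_closed qint_ic[symmetric] ic_pow qL_ic[symmetric] mult.commute)
  also have "\<dots> \<noteq> 0" by (rule lin_nz) (simp add: qK_nz)
  finally show ?thesis .
qed

lemma kap_nz: "kap n \<noteq> 0"
  by (induction n) (simp_all add: qint_nz)

lemma lcf_nz: "j \<le> D \<Longrightarrow> lcf D j \<noteq> 0"
  by (auto simp: lcf_def qint_nz)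

lemma lcf_shift: "lcf (Suc D) (Suc j) = qint qL (Suc D) * lcf D j"
  unfolding lcf_def prod.lessThan_Suc_shift by simp

lemma lcf_Suc: "lcf D (Suc j) = lcf D j * qint qL (D - j)"
  by (simp add: lcf_def)

lemma lcK_lcP: "lcf (2 * n + 1) n * qint qL (Suc n) = qint qL (2 * n + 1) * lcf (2 * n) n"
proof -
  have "lcf (Suc (2 * n)) (Suc n) = lcf (Suc (2 * n)) n * qint qL (Suc n)"
    using lcf_Suc[of "Suc (2 * n)" n] by (simp add: Suc_diff_le)
  moreover have "lcf (Suc (2 * n)) (Suc n) = qint qL (Suc (2 * n)) * lcf (2 * n) n"
    by (rule lcf_shift)
  ultimately show ?thesis by simp
qed

lemma lcP_lcK: "lcf (2 * Suc n) (Suc n) = qint qL (2 * Suc n) * lcf (2 * n + 1) n"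
  using lcf_shift[of "2 * n + 1" n] by simp

lemma cfB_even: "cfB (2 * n) = qint qL (2 * n + 1)" by (simp add: cfB_def)
lemma cfB_odd: "cfB (Suc (2 * n)) = (qL ^ Suc n + 1) / qint qL (Suc n)" by (simp add: cfB_def)
lemma cfA_odd: "cfA (Suc (2 * n)) = qL ^ n * (qint qL (Suc n) - zL)" by (simp add: cfA_def)
lemma cfA_even: "cfA (Suc (Suc (2 * n))) = - node zL (Suc n)"
  by (simp add: cfA_def node_closed algebra_simps)

lemma cfB_nz: "cfB j \<noteq> 0"
proof (cases "even j")
  case True
  then obtain m where "j = 2 * m" by (auto elim: evenE)
  then show ?thesis by (simp add: cfB_even qint_nz)
next
  case False
  then obtain m where j: "j = Suc (2 * m)" by (auto elim: oddE)
  have "qL ^ Suc m + 1 \<noteq> 0"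
  proof
    assume "qL ^ Suc m + 1 = 0"
    then have "qL ^ Suc m = - 1" by (simp add: eq_neg_iff_add_eq_0)
    then show False using qL_pow_ne_neg1 by blast
  qed
  then show ?thesis unfolding j cfB_odd using qint_nz[of "Suc m"] by simp
qed

lemma cfA_nz: "cfA j \<noteq> 0"
proof (cases "even j")
  case True
  then obtain m where j: "j = 2 * m" by (auto elim: evenE)
  show ?thesis
  proof (cases m)
    case 0 then show ?thesis using j by (simp add: cfA_def)
  next
    case (Suc k)
    then have "j = Suc (Suc (2 * k))" using j by simp
    then show ?thesis using nz_node_z[of "Suc k"] by (simp only: cfA_even neg_equal_0_iff_equal) simp
  qed
next
  case False
  then obtain m where j: "j = Suc (2 * m)" by (auto elim: oddE)
  then show ?thesis using nz_qint_minus_z by (simp only: cfA_odd) simp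
qed

lemma q2: "qint qL (2 * Suc n) = (qL ^ Suc n + 1) * qint qL (Suc n)"
proof -
  have e: "2 * Suc n = Suc n + Suc n" by simp
  show ?thesis unfolding e using qint_add[of qL "Suc n" "Suc n"] by (simp add: algebra_simps)
qed

lemma nondeg:
  fixes L :: "Lqz poly \<Rightarrow> Lqz" and Q :: "nat \<Rightarrow> Lqz poly"
  assumes ladd: "\<And>p r. L (p + r) = L p + L r" and lsm: "\<And>c p. L (smult c p) = c * L p"
    and degQ: "\<And>d. degree (Q d) = d" and Qnz: "\<And>d. Q d \<noteq> 0"
    and orth: "\<And>d k. k < d \<Longrightarrow> L (monom 1 k * Q d) = 0"
    and diag: "\<And>d. L (monom 1 d * Q d) \<noteq> 0"
  shows "(\<And>k. k \<le> degree E \<Longrightarrow> L (monom 1 k * E) = 0) \<Longrightarrow> E = 0"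
proof (induction "degree E" arbitrary: E rule: less_induct)
  case less
  show ?case
  proof (rule ccontr)
    assume E: "E \<noteq> 0"
    define d where "d = degree E"
    define c where "c = lead_coeff E / lead_coeff (Q d)"
    define E' where "E' = E - smult c (Q d)"
    have lq: "lead_coeff (Q d) \<noteq> 0" using Qnz by simp
    have c0: "c \<noteq> 0" using E lq by (simp add: c_def)
    have ldiff: "L (p - smult c r) = L p - c * L r" for p r
      using ladd[of p "smult (- c) r"] lsm[of "- c" r] by simp
    have degE': "degree E' \<le> d" unfolding E'_def d_def
      by (rule degree_diff_le) (simp_all add: degQ)
    have "coeff E' d = coeff E d - c * coeff (Q d) d" by (simp add: E'_def)
    also have "\<dots> = 0"
    proof -
      have lq': "coeff (Q d) d \<noteq> 0" using lq degQ[of d] by metis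
      have c': "c = coeff E d / coeff (Q d) d" using degQ[of d] by (simp add: c_def d_def)
      show ?thesis using lq' by (simp add: c')
    qed
    finally have cE': "coeff E' d = 0" .
    have E'0: "E' = 0"
    proof (rule ccontr)
      assume nz: "E' \<noteq> 0"
      have lt: "degree E' < d"
      proof (rule ccontr)
        assume "\<not> degree E' < d"
        then have "degree E' = d" using degE' by simp
        then show False using cE' nz by (metis leading_coeff_0_iff)
      qed
      have "L (monom 1 k * E') = 0" if "k \<le> degree E'" for k
      proof -
        have "L (monom 1 k * E') = L (monom 1 k * E) - c * L (monom 1 k * Q d)"
          unfolding E'_def by (simp add: right_diff_distrib mult_smult_right ldiff)
        also have "\<dots> = 0" using less.prems[of k] orth[of k d] that lt d_def by simp
        finally show ?thesis .
      qed
      then have "E' = 0" using less.hyps[of E'] lt d_def by blast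
      with nz show False by simp
    qed
    then have "E = smult c (Q d)" by (simp add: E'_def)
    then have "L (monom 1 d * E) = c * L (monom 1 d * Q d)" by (simp add: mult_smult_right lsm)
    moreover have "L (monom 1 d * E) = 0" using less.prems[of d] d_def by simp
    ultimately show False using c0 diag[of d] by simp
  qed
qed

context qbc
begin

lemma J_00: "J 0 0 = 1" by (simp add: J_def Phi_1)

lemma J_0b_nz: "J 0 b \<noteq> 0"
proof (induction b)
  case 0 then show ?case by (simp add: J_00)
next
  case (Suc b)
  have "qint qL (Suc (Suc b)) * J 0 (Suc b) = - (qL ^ 0 * qint qL (Suc b) * node zL (Suc b)) * J 0 b"
    using J_b[of 0 b] by simp
  then show ?case using Suc qint_nz[of "Suc b"] qint_nz[of "Suc (Suc b)"] nz_node_z[of "Suc b"] by auto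
qed

lemma J_nz: "J a b \<noteq> 0"
proof (induction a)
  case 0 then show ?case by (rule J_0b_nz)
next
  case (Suc a)
  have "qint qL (Suc (Suc (a + b))) * J (Suc a) b = - (qint qL (Suc a) * qL ^ b * (qint qL (Suc a) - zL)) * J a b"
    by (rule J_a)
  then show ?case using Suc qint_nz[of "Suc a"] nz_qint_minus_z[of "Suc a"] by auto
qed

end


definition lcP :: "nat \<Rightarrow> Lqz" where "lcP n = lcf (2 * n) n"
definition lcK :: "nat \<Rightarrow> Lqz" where "lcK n = lcf (2 * n + 1) n"

lemma lcP_nz: "lcP n \<noteq> 0" by (simp add: lcP_def lcf_nz)
lemma lcK_nz: "lcK n \<noteq> 0" by (simp add: lcK_def lcf_nz)

fun pc :: "nat \<Rightarrow> Lqz" where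
  "pc 0 = 1"
| "pc (Suc n) = cfB (Suc (2 * n)) * cfB (2 * n) * pc n * lcP n
      / (cfA (Suc (Suc (2 * n))) * cfA (Suc (2 * n)) * lcP (Suc n))"

definition kc :: "nat \<Rightarrow> Lqz" where
  "kc n = - cfB (2 * n) * pc n * lcP n / (cfA (Suc (2 * n)) * lcK n)"

lemma kc_fact: "kc n * cfA (Suc (2 * n)) * lcK n = - cfB (2 * n) * pc n * lcP n"
  using cfA_nz[of "Suc (2 * n)"] lcK_nz[of n] by (simp add: kc_def field_simps)

lemma pc_fact: "pc (Suc n) * cfA (Suc (Suc (2 * n))) * lcP (Suc n) = - cfB (Suc (2 * n)) * kc n * lcK n"
  using cfA_nz[of "Suc (2 * n)"] cfA_nz[of "Suc (Suc (2 * n))"] lcK_nz[of n] lcP_nz[of "Suc n"]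
  by (simp add: kc_def field_simps)

lemma kc_0: "kc 0 = - 1 / cfA 1"
  by (simp add: kc_def lcP_def lcK_def lcf_def cfB_def)

context qbc
begin

definition PP :: "nat \<Rightarrow> Lqz poly" where "PP n = smult (pc n) (Pt n)"
definition KK :: "nat \<Rightarrow> Lqz poly" where "KK n = smult (kc n) (Kt n)"

lemma NDP: "(\<And>k. k \<le> degree E \<Longrightarrow> Phi (monom 1 k * E) = 0) \<Longrightarrow> E = 0"
proof (rule nondeg[where L = Phi and Q = Pt])
  show "degree (Pt d) = d" for d using Pt_deg_lc by blast
  show "Pt d \<noteq> 0" for d
  proof
    assume "Pt d = 0"
    then have "lead_coeff (Pt d) = 0" by simp
    then show False using Pt_deg_lc[of d] lcf_nz[of d "2 * d"] by auto
  qed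
  show "Phi (monom 1 k * Pt d) = 0" if "k < d" for d k
    using that by (intro Pt_orth) (simp add: degree_monom_eq)
  show "Phi (monom 1 d * Pt d) \<noteq> 0" for d
    using kap_nz[of d] J_nz[of d d] by (simp add: Pt_diag)
qed (simp_all add: Phi_add Phi_smult)

lemma NDK: "(\<And>k. k \<le> degree E \<Longrightarrow> Phi ([:0,1:] * (monom 1 k * E)) = 0) \<Longrightarrow> E = 0"
proof (rule nondeg[where L = "\<lambda>p. Phi ([:0,1:] * p)" and Q = Kt])
  show "degree (Kt d) = d" for d using Kt_deg_lc by blast
  show "Kt d \<noteq> 0" for d
  proof
    assume "Kt d = 0"
    then have "lead_coeff (Kt d) = 0" by simp
    then show False using Kt_deg_lc[of d] lcf_nz[of d "2 * d + 1"] by auto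
  qed
  have e: "[:0,1:] * (monom 1 k * Kt d) = monom 1 k * KtU d" for k d
    by (simp add: KtU_Kt mult_ac del: mult_pCons_left mult_pCons_right)
  show "Phi ([:0,1:] * (monom 1 k * Kt d)) = 0" if "k < d" for d k
    unfolding e using that by (intro KtU_orth) (simp add: degree_monom_eq)
  show "Phi ([:0,1:] * (monom 1 d * Kt d)) \<noteq> 0" for d
    unfolding e using kap_nz[of d] J_nz[of "Suc d" d] by (simp add: KtU_diag)
qed (simp_all only: distrib_left mult_smult_right Phi_add Phi_smult)

lemma qpow1_nz: "qL ^ Suc n + 1 \<noteq> 0"
proof
  assume "qL ^ Suc n + 1 = 0"
  then have "qL ^ Suc n = - 1" by (simp add: eq_neg_iff_add_eq_0)
  then show False using qL_pow_ne_neg1 by blast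
qed

lemma q2': "qint qL (Suc (Suc (2 * n))) = (qL ^ Suc n + 1) * qint qL (Suc n)"
  using q2[of n] by (simp add: mult_2)

lemma alg1:
  fixes pc X b kc Y W N A B L K s :: Lqz
  assumes "N \<noteq> 0" "A \<noteq> 0" "W \<noteq> 0" "B \<noteq> 0" "L \<noteq> 0"
    and "b = W / N" "kc = - B * pc * L / (A * K)" "K = B * L / N" "Y = - A * X / W"
  shows "pc * (s * X) = b * kc * (s * Y)"
  using assms(1-5) unfolding assms(6,7,9) unfolding assms(8) by (simp add: field_simps)

lemma alg2:
  fixes kc Y T pca N Nd Qa Z k ka s :: Lqz
  assumes "N \<noteq> 0" "Nd \<noteq> 0" "Qa \<noteq> 0" "T \<noteq> 0"
    and "pca = kc / (N * N * Nd)" "Z = - (Qa * N * Nd) * Y / T" "ka = N / Qa * k"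
  shows "kc * (s * k * Y) = T * pca * (- s * ka * Z)"
  using assms(1-4) unfolding assms(5-7) by (simp add: field_simps)

lemma C1: "pc n * Phi (monom 1 n * Pt n) = cfB (Suc (2 * n)) * kc n * Phi (monom 1 n * KtU n)"
proof -
  define X where "X = J n n"
  define Y where "Y = J (Suc n) n"
  have nz: "qint qL (Suc n) \<noteq> 0" "qint qL (2 * n + 1) \<noteq> 0" "lcP n \<noteq> 0" "qL ^ n \<noteq> 0"
    "qint qL (Suc n) - zL \<noteq> 0" "qL ^ Suc n + 1 \<noteq> 0"
    using qint_nz[of "Suc n"] qint_nz[of "2 * n + 1"] lcP_nz[of n] nz_qint_minus_z[of "Suc n"] qpow1_nz[of n]
    by simp_all
  have E: "qint qL (Suc (Suc (n + n))) * Y = - (qint qL (Suc n) * qL ^ n * (qint qL (Suc n) - zL)) * X"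
    using J_a[of n n] by (simp add: X_def Y_def)
  have Q: "qint qL (Suc (Suc (n + n))) = qint qL (Suc n) * (qL ^ Suc n + 1)"
  proof -
    have e: "Suc (Suc (n + n)) = Suc (Suc (2 * n))" by simp
    show ?thesis unfolding e q2' by (simp only: mult.commute)
  qed
  have "qint qL (Suc n) * (Y * (qL ^ Suc n + 1)) = qint qL (Suc n) * (- (qL ^ n * (qint qL (Suc n) - zL)) * X)"
    using E unfolding Q by (simp only: mult_ac mult_minus_left mult_minus_right)
  then have "Y * (qL ^ Suc n + 1) = - (qL ^ n * (qint qL (Suc n) - zL)) * X"
    using mult_left_cancel[OF nz(1)] by blast
  then have Y: "Y = - (qL ^ n * (qint qL (Suc n) - zL)) * X / (qL ^ Suc n + 1)"
    using nz(6) by (simp add: field_simps)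
  have lk: "lcK n = qint qL (2 * n + 1) * lcP n / qint qL (Suc n)"
    using lcK_lcP[of n] nz by (simp add: lcK_def lcP_def field_simps)
  have kc: "kc n = - qint qL (2 * n + 1) * pc n * lcP n / (qL ^ n * (qint qL (Suc n) - zL) * lcK n)"
    by (simp add: kc_def cfB_even cfA_odd)
  have "pc n * ((- 1) ^ n * kap n * X) = cfB (Suc (2 * n)) * kc n * ((- 1) ^ n * kap n * Y)"
    unfolding mult.assoc[of "(- 1) ^ n"]
    by (rule alg1[where N = "qint qL (Suc n)" and A = "qL ^ n * (qint qL (Suc n) - zL)" and W = "qL ^ Suc n + 1"
          and B = "qint qL (2 * n + 1)" and L = "lcP n" and K = "lcK n"])
       (use nz in \<open>simp_all add: cfB_odd kc Y lk\<close>)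
  then show ?thesis unfolding Pt_diag KtU_diag X_def[symmetric] Y_def[symmetric] .
qed

lemma C2: "kc n * Phi (monom 1 n * KtU n) = cfB (2 * Suc n) * pc (Suc n) * Phi (monom 1 (Suc n) * Pt (Suc n))"
proof -
  define Y where "Y = J (Suc n) n"
  define Z where "Z = J (Suc n) (Suc n)"
  have nz: "qint qL (Suc n) \<noteq> 0" "qint qL (2 * Suc n + 1) \<noteq> 0" "lcK n \<noteq> 0" "qL ^ Suc n \<noteq> 0"
    "node zL (Suc n) \<noteq> 0" "qL ^ Suc n + 1 \<noteq> 0" "kap n \<noteq> 0"
    using qint_nz[of "Suc n"] qint_nz[of "2 * Suc n + 1"] lcK_nz[of n] nz_node_z[of "Suc n"] qpow1_nz[of n] kap_nz[of n]
    by simp_all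
  have "qint qL (2 * Suc n + 1) * Z = - (qL ^ Suc n * qint qL (Suc n) * node zL (Suc n)) * Y"
    using J_b[of "Suc n" n] by (simp add: Z_def Y_def mult_2)
  then have Z: "Z = - (qL ^ Suc n * qint qL (Suc n) * node zL (Suc n)) * Y / qint qL (2 * Suc n + 1)"
    using nz by (simp add: field_simps)
  have "pc (Suc n) * (- node zL (Suc n)) * ((qL ^ Suc n + 1) * qint qL (Suc n) * lcK n)
      = - ((qL ^ Suc n + 1) / qint qL (Suc n)) * kc n * lcK n"
    using pc_fact[of n] lcP_lcK[of n] q2[of n] by (simp add: cfA_even cfB_odd lcP_def lcK_def del: pc.simps)
  then have "(pc (Suc n) * (qint qL (Suc n) * qint qL (Suc n) * node zL (Suc n))) * ((qL ^ Suc n + 1) * lcK n)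
     = kc n * ((qL ^ Suc n + 1) * lcK n)"
    using nz by (simp add: field_simps del: pc.simps node.simps)
  then have "pc (Suc n) * (qint qL (Suc n) * qint qL (Suc n) * node zL (Suc n)) = kc n"
    using nz by (metis (no_types) mult_right_cancel mult_eq_0_iff)
  then have pc: "pc (Suc n) = kc n / (qint qL (Suc n) * qint qL (Suc n) * node zL (Suc n))"
    using nz by (simp add: eq_divide_eq del: pc.simps node.simps)
  have kp: "kap (Suc n) = qint qL (Suc n) / qL ^ Suc n * kap n" by simp
  have b: "cfB (2 * Suc n) = qint qL (2 * Suc n + 1)" by (rule cfB_even)
  show ?thesis
    unfolding Pt_diag KtU_diag Y_def[symmetric] Z_def[symmetric] b power_Suc mult_minus1
    by (rule alg2[where N = "qint qL (Suc n)" and Nd = "node zL (Suc n)" and Qa = "qL ^ Suc n"])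
       (use nz pc Z kp in \<open>simp_all del: pc.simps node.simps kap.simps\<close>)
qed

end


lemma degree_le_pred:
  assumes "degree p \<le> Suc n" "coeff p (Suc n) = 0"
  shows "degree p \<le> n"
proof (rule ccontr)
  assume "\<not> degree p \<le> n"
  then have "degree p = Suc n" using assms(1) by simp
  then have "p = 0" using assms(2) by (metis leading_coeff_0_iff)
  then show False using \<open>\<not> degree p \<le> n\<close> by simp
qed

lemma coeff_Pt_top: "coeff (Pt n) n = lcP n"
  using Pt_deg_lc[of n] by (auto simp: lcP_def)
lemma coeff_Pt_above: "n < i \<Longrightarrow> coeff (Pt n) i = 0"
  using Pt_deg_lc[of n] by (auto intro: coeff_eq_0)
lemma coeff_KtU_top: "coeff (KtU n) (Suc n) = lcK n"
  using KtU_deg_lc[of n] by (auto simp: lcK_def)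
lemma coeff_Kt_top: "coeff (Kt n) n = lcK n"
  using Kt_deg_lc[of n] by (auto simp: lcK_def)
lemma coeff_Kt_above: "n < i \<Longrightarrow> coeff (Kt n) i = 0"
  using Kt_deg_lc[of n] by (auto intro: coeff_eq_0)

lemma X_monom: "[:0,1:] * monom 1 k = monom (1::Lqz) (Suc k)"
  by (simp add: monom_Suc)

context qbc
begin

lemma A_rel: "PP n = smult (cfB (Suc (2 * n))) ([:0,1:] * KK n) + smult (cfA (Suc (Suc (2 * n)))) (PP (Suc n))"
proof -
  define b where "b = cfB (Suc (2 * n))"
  define a where "a = cfA (Suc (Suc (2 * n)))"
  define D where "D = smult (pc n) (Pt n) - smult (b * kc n) (KtU n) - smult (a * pc (Suc n)) (Pt (Suc n))"
  have XK: "[:0,1:] * KK n = smult (kc n) (KtU n)" by (simp add: KK_def KtU_Kt mult_smult_right)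
  have deg: "degree D \<le> Suc n"
    unfolding D_def
    by (intro degree_diff_le degree_smult_le[THEN order_trans])
       (use Pt_deg_lc[of n] KtU_deg_lc[of n] Pt_deg_lc[of "Suc n"] in auto)
  have "coeff D (Suc n) = - (b * kc n * lcK n) - a * pc (Suc n) * lcP (Suc n)"
    by (simp add: D_def coeff_Pt_above coeff_KtU_top coeff_Pt_top)
  also have "\<dots> = 0" using pc_fact[of n] by (simp add: a_def b_def mult_ac del: pc.simps)
  finally have degD: "degree D \<le> n" using degree_le_pred[OF deg] by simp
  have "D = 0"
  proof (rule NDP)
    fix k assume "k \<le> degree D"
    then have k: "k \<le> n" using degD by simp
    have o3: "Phi (monom 1 k * Pt (Suc n)) = 0" using k by (intro Pt_orth) (simp add: degree_monom_eq)
    have "Phi (monom 1 k * D) = pc n * Phi (monom 1 k * Pt n) - b * kc n * Phi (monom 1 k * KtU n)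
          - a * pc (Suc n) * Phi (monom 1 k * Pt (Suc n))"
      by (simp add: D_def right_diff_distrib mult_smult_right Phi_diff Phi_smult del: pc.simps)
    also have "\<dots> = 0"
    proof (cases "k < n")
      case True
      then show ?thesis using o3 Pt_orth[of "monom 1 k" n] KtU_orth[of "monom 1 k" n] by (simp add: degree_monom_eq)
    next
      case False
      then have "k = n" using k by simp
      then show ?thesis using o3 C1[of n] by (simp add: b_def del: pc.simps)
    qed
    finally show "Phi (monom 1 k * D) = 0" .
  qed
  then show ?thesis
    unfolding XK PP_def by (simp add: D_def a_def b_def algebra_simps del: pc.simps)
qed

lemma B_rel: "KK n = smult (cfB (2 * Suc n)) (PP (Suc n)) + smult (cfA (Suc (2 * Suc n))) (KK (Suc n))"
proof -
  define b where "b = cfB (2 * Suc n)"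
  define a where "a = cfA (Suc (2 * Suc n))"
  define D where "D = smult (kc n) (Kt n) - smult (b * pc (Suc n)) (Pt (Suc n)) - smult (a * kc (Suc n)) (Kt (Suc n))"
  have deg: "degree D \<le> Suc n"
    unfolding D_def
    by (intro degree_diff_le degree_smult_le[THEN order_trans])
       (use Kt_deg_lc[of n] Pt_deg_lc[of "Suc n"] Kt_deg_lc[of "Suc n"] in auto)
  have "coeff D (Suc n) = - (b * pc (Suc n) * lcP (Suc n)) - a * kc (Suc n) * lcK (Suc n)"
    by (simp add: D_def coeff_Kt_above coeff_Kt_top coeff_Pt_top del: pc.simps)
  also have "\<dots> = 0" using kc_fact[of "Suc n"] by (simp add: a_def b_def mult_ac del: pc.simps)
  finally have degD: "degree D \<le> n" using degree_le_pred[OF deg] by simp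
  have "D = 0"
  proof (rule NDK)
    fix k assume "k \<le> degree D"
    then have k: "k \<le> n" using degD by simp
    have e1: "[:0,1:] * (monom 1 k * Kt m) = monom 1 k * KtU m" for m
      by (simp add: KtU_Kt mult_ac del: mult_pCons_left mult_pCons_right)
    have e2: "[:0,1:] * (monom 1 k * Pt m) = monom 1 (Suc k) * Pt m" for m
      by (simp add: X_monom mult.assoc[symmetric] del: mult_pCons_left mult_pCons_right)
    have o2: "Phi (monom 1 (Suc k) * Pt (Suc n)) = 0 \<or> k = n"
      using k Pt_orth[of "monom 1 (Suc k)" "Suc n"] by (auto simp: degree_monom_eq)
    have o3: "Phi (monom 1 k * KtU (Suc n)) = 0" using k by (intro KtU_orth) (simp add: degree_monom_eq)
    have "Phi ([:0,1:] * (monom 1 k * D)) = kc n * Phi (monom 1 k * KtU n) - b * pc (Suc n) * Phi (monom 1 (Suc k) * Pt (Suc n))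
          - a * kc (Suc n) * Phi (monom 1 k * KtU (Suc n))"
      unfolding D_def right_diff_distrib mult_smult_right e1 e2 Phi_diff Phi_smult by simp
    also have "\<dots> = 0"
    proof (cases "k < n")
      case True
      then show ?thesis using o3 Pt_orth[of "monom 1 (Suc k)" "Suc n"] KtU_orth[of "monom 1 k" n] by (simp add: degree_monom_eq)
    next
      case False
      then have "k = n" using k by simp
      then show ?thesis using o3 C2[of n] by (simp add: b_def del: pc.simps)
    qed
    finally show "Phi ([:0,1:] * (monom 1 k * D)) = 0" .
  qed
  then show ?thesis
    unfolding KK_def PP_def by (simp add: D_def a_def b_def algebra_simps del: pc.simps)
qed

end




lemma Pt_0: "Pt 0 = 1" by (simp add: Pt_def gP_def)
lemma Kt_0: "Kt 0 = 1"
proof -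
  have "KtU 0 = [:0, 1:]" by (simp add: KtU_def gK_def pr_def)
  then show ?thesis by (simp add: Kt_def)
qed

lemma fcx_nth: "(fps_const a * fps_X * f) $ n = (if n = 0 then 0 else a * f $ (n - 1))" for a :: Lqz
proof -
  have "fps_const a * fps_X * f = fps_X * (fps_const a * f)"
    by (simp only: mult.commute[of "fps_const a" fps_X] mult.assoc)
  then show ?thesis by (simp add: fps_const_mult_left)
qed

context qbc
begin

definition Hs :: "nat \<Rightarrow> Lqz fps" where
  "Hs j = (if j = 0 then 1
     else if odd j then Abs_fps (\<lambda>k. Phi (monom 1 (k + (j - 1) div 2) * PP ((j - 1) div 2)))
     else Abs_fps (\<lambda>k. Phi (monom 1 (k + j div 2) * KK (j div 2 - 1))))"

lemma Hs_odd: "Hs (Suc (2 * n)) $ k = Phi (monom 1 (k + n) * PP n)"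
  by (simp add: Hs_def)
lemma Hs_even: "Hs (Suc (Suc (2 * n))) $ k = Phi (monom 1 (k + Suc n) * KK n)"
  by (simp add: Hs_def)

lemma Hs_odd': "Hs (Suc (Suc (Suc (2 * n)))) $ k = Phi (monom 1 (k + Suc n) * PP (Suc n))"
  using Hs_odd[of "Suc n" k] by simp
lemma Hs_even': "Hs (Suc (Suc (Suc (Suc (2 * n))))) $ k = Phi (monom 1 (k + Suc (Suc n)) * KK (Suc n))"
  using Hs_even[of "Suc n" k] by simp

lemma mono_mult: "monom (1::Lqz) a * monom 1 b = monom 1 (a + b)"
  by (simp add: mult_monom)

lemma Hs_rec: "Hs j = fps_const (cfB j) * Hs (Suc j) + fps_const (cfA (Suc j)) * fps_X * Hs (Suc (Suc j))"
proof (rule fps_ext)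
  fix k
  consider "j = 0" | n where "j = Suc (2 * n)" | n where "j = Suc (Suc (2 * n))"
  proof -
    have "j = 0 \<or> (\<exists>n. j = Suc (2 * n)) \<or> (\<exists>n. j = Suc (Suc (2 * n)))" by presburger
    then show ?thesis using that by blast
  qed
  then show "Hs j $ k = (fps_const (cfB j) * Hs (Suc j) + fps_const (cfA (Suc j)) * fps_X * Hs (Suc (Suc j))) $ k"
  proof cases
    case 1
    have H1: "Hs 1 $ k = mu beta k"
      using Hs_odd[of 0 k] by (simp add: PP_def Pt_0 Phi_monom)
    have H2: "Hs 2 $ i = kc 0 * mu beta (Suc i)" for i
      using Hs_even[of 0 i] by (simp add: KK_def Kt_0 Phi_monom Phi_smult numeral_2_eq_2)
    have b0: "cfB 0 = 1" by (simp add: cfB_def)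
    show ?thesis
    proof (cases k)
      case 0 then show ?thesis using 1 H1 mu0 b0 by (simp add: Hs_def)
    next
      case (Suc i)
      then show ?thesis using 1 H1 H2[of i] b0 cfA_nz[of 1] by (simp add: kc_0 numeral_2_eq_2 Hs_def[of 0] fcx_nth)
    qed
  next
    case 2
    have e1: "Suc (Suc j) = Suc (2 * Suc n)" and e0: "Suc j = Suc (Suc (2 * n))" using 2 by simp_all
    have rel: "Phi (monom 1 (k + n) * PP n) = cfB (Suc (2 * n)) * Phi (monom 1 (Suc (k + n)) * KK n)
        + cfA (Suc (Suc (2 * n))) * Phi (monom 1 (k + n) * PP (Suc n))"
    proof -
      have mx: "monom 1 (k + n) * ([:0,1:] * KK n) = monom 1 (Suc (k + n)) * KK n"
        by (simp add: X_monom[symmetric] mult_ac del: mult_pCons_left mult_pCons_right)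
      have "Phi (monom 1 (k + n) * PP n) = Phi (monom 1 (k + n) * (smult (cfB (Suc (2 * n))) ([:0,1:] * KK n) + smult (cfA (Suc (Suc (2 * n)))) (PP (Suc n))))"
        by (subst A_rel) (rule refl)
      also have "\<dots> = cfB (Suc (2 * n)) * Phi (monom 1 (k + n) * ([:0,1:] * KK n)) + cfA (Suc (Suc (2 * n))) * Phi (monom 1 (k + n) * PP (Suc n))"
        by (simp only: distrib_left mult_smult_right Phi_add Phi_smult)
      finally show ?thesis unfolding mx .
    qed
    show ?thesis
    proof (cases k)
      case 0
      have "Phi (monom 1 n * PP (Suc n)) = 0"
        unfolding PP_def mult_smult_right Phi_smult by (simp add: Pt_orth degree_monom_eq)
      then show ?thesis using rel 0 unfolding 2 e0 e1 by (simp add: fcx_nth Hs_odd Hs_even Hs_odd' Hs_even')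
    next
      case (Suc i)
      then show ?thesis using rel unfolding 2 e0 e1 by (simp add: fcx_nth Hs_odd Hs_even Hs_odd' Hs_even')
    qed
  next
    case 3
    have e1: "Suc (Suc j) = Suc (Suc (2 * Suc n))" and e0: "Suc j = Suc (2 * Suc n)" using 3 by simp_all
    have rel: "Phi (monom 1 (k + Suc n) * KK n) = cfB (2 * Suc n) * Phi (monom 1 (k + Suc n) * PP (Suc n))
        + cfA (Suc (2 * Suc n)) * Phi (monom 1 (k + Suc n) * KK (Suc n))"
      by (subst B_rel) (simp add: distrib_left mult_smult_right Phi_add Phi_smult del: pc.simps)
    show ?thesis
    proof (cases k)
      case 0
      have "monom 1 (Suc n) * Kt (Suc n) = monom 1 n * KtU (Suc n)"
        by (simp add: KtU_Kt X_monom[symmetric] mult_ac del: mult_pCons_left mult_pCons_right)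
      then have "Phi (monom 1 (Suc n) * KK (Suc n)) = 0"
        unfolding KK_def mult_smult_right Phi_smult by (simp add: KtU_orth degree_monom_eq)
      then show ?thesis using rel 0 unfolding 3 e0 e1
        by (simp add: fcx_nth Hs_odd Hs_even Hs_odd' Hs_even')
    next
      case (Suc i)
      then show ?thesis using rel unfolding 3 e0 e1
        by (simp add: fcx_nth Hs_odd Hs_even Hs_odd' Hs_even')
    qed
  qed
qed

lemma main: "cf_conv cfA cfB \<longlonglongrightarrow> Bhat beta"
proof -
  have "cf_conv cfA cfB \<longlonglongrightarrow> Hs 1 * inverse (Hs 0)"
    by (rule cf_limit[where H = Hs and a = cfA and b = cfB, OF Hs_rec cfB_nz]) (simp add: Hs_def)
  moreover have "Hs 1 = Bhat beta"
  proof (rule fps_ext)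
    fix k show "Hs 1 $ k = Bhat beta $ k"
      using Hs_odd[of 0 k] by (simp add: PP_def Pt_0 Phi_monom Bhat_mu)
  qed
  moreover have "Hs 0 = 1" by (simp add: Hs_def)
  ultimately show ?thesis by simp
qed

end


theorem mainTheorem11:
  fixes beta :: "nat \<Rightarrow> Kq"
  assumes "is_qBC_numbers beta"
  shows "cf_conv cfA cfB \<longlonglongrightarrow> Bhat beta"
proof -
  interpret qbc beta by (rule qbc.intro) (rule assms)
  show ?thesis by (rule main)
qed

end
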